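(* Let $x=(x_1,\dots,x_n)$ be a vector of variables, $f=(f_1,\dots,f_n)$ a vector of differential-free terms, and let $y=(y_1,\dots,y_n)$ be fresh variables (not occurring in $f$, in the domain constraints below, or in $e$). Then all instances of the following three formulas are valid: (Uniq) $\big(\langle x'=f(x)\,\&\,Q_1\rangle P\big)\wedge\big(\langle x'=f(x)\,\&\,Q_2\rangle P\big)\leftrightarrow \langle x'=f(x)\,\&\,Q_1\wedge Q_2\rangle P$, for semianalytic formulas $Q_1,Q_2$ and any formula $P$; (Cont) $x=y\rightarrow\big(\langle x'=f(x)\,\&\,e>0\rangle\, x\neq y\;\leftrightarrow\; e>0\big)$, for any differential-free term $e$, provided that the ODE locally evolves $x$, i.e. in every state the value of the vector $f$ is not the zero vector; (Dadj) $\langle x'=f(x)\,\&\,Q(x)\rangle\, x=y\;\leftrightarrow\;\langle y'=-f(y)\,\&\,Q(y)\rangle\, y=x$, for a semianalytic formula $Q(x)$, where $f(y)$, $Q(y)$ denote the results of replacing $x$ by $y$.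
   Context: Variables are real-valued; each variable $x$ has a differential variable $x'$. A state is a map from variables to $\mathbb{R}$. Terms are built from variables, rational constants, $+$, $\cdot$ and finitely many fixed function symbols interpreted as $C^\infty$ functions $\mathbb{R}^k\to\mathbb{R}$, evaluated as usual; differential-free terms contain no differential variables. Semianalytic formulas are built from comparisons $e\sim\tilde e$ ($\sim\in\{=,\ge,>\}$) of differential-free terms by $\wedge,\vee,\neg$. Formulas additionally allow quantifiers and modalities $[\alpha]\phi$, $\langle\alpha\rangle\phi$ for ODEs $\alpha \equiv x'=f(x)\,\&\,Q$ ($Q$ semianalytic; omitted if $Q$ is true). For vectors, $x=y$ abbreviates $\bigwedge_i x_i=y_i$ and $x\neq y$ is its negation. Semantics of ODEs: $(\omega,\nu)\in[\![x'=f(x)\&Q]\!]$ iff there are $T\ge0$ and $\varphi:[0,T]\to$ states with $\varphi(0)=\omega$ on all variables except $x'$, $\varphi(T)=\nu$, and for all $\zeta\in[0,T]$: $\varphi(\zeta)$ satisfies $x'=f(x)\wedge Q$, $\varphi(\zeta)$ agrees with $\varphi(0)$ on all variables other than $x,x'$, and, if $T>0$, $t\mapsto\varphi(t)(x)$ is differentiable at $\zeta$ with derivative $\varphi(\zeta)(x')$. Then $\omega\models[\alpha]\phi$ iff $\nu\models\phi$ for all $\nu$ with $(\omega,\nu)\in[\![\alpha]\!]$, and $\omega\models\langle\alpha\rangle\phi$ iff $\nu\models\phi$ for some such $\nu$. A formula is valid if true in all states. *)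

theory Defs
  imports Complex_Main
begin

text \<open>Each (base) variable v has a differential variable v'.\<close>
datatype 'v var = Base 'v | Diff 'v

type_synonym 'v state = "'v var \<Rightarrow> real"

text \<open>A function on R^k is represented as a function on real lists; only lists of
  length k matter. Continuity in the sup-norm sense, partial derivatives in direction i.\<close>

definition cont_len :: "nat \<Rightarrow> (real list \<Rightarrow> real) \<Rightarrow> bool" where
  "cont_len k g \<longleftrightarrow> (\<forall>xs. length xs = k \<longrightarrow> (\<forall>\<epsilon>>0. \<exists>\<delta>>0. \<forall>ys. length ys = k \<longrightarrow>
      (\<forall>i<k. \<bar>ys ! i - xs ! i\<bar> < \<delta>) \<longrightarrow> \<bar>g ys - g xs\<bar> < \<epsilon>))"

text \<open>C-infinity: all iterated partial derivatives exist everywhere and are continuous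
  (greatest fixed point).\<close>
coinductive smooth_len :: "nat \<Rightarrow> (real list \<Rightarrow> real) \<Rightarrow> bool" for k where
  "cont_len k g \<Longrightarrow>
   (\<forall>i<k. \<exists>h. (\<forall>xs. length xs = k \<longrightarrow>
        ((\<lambda>t. g (xs[i := xs ! i + t])) has_real_derivative h xs) (at 0)) \<and> smooth_len k h)
   \<Longrightarrow> smooth_len k g"

datatype ('v, 'f) trm =
    Var "'v var"
  | Const rat
  | Plus "('v, 'f) trm" "('v, 'f) trm"
  | Times "('v, 'f) trm" "('v, 'f) trm"
  | Fn 'f "('v, 'f) trm list"

text \<open>An ODE x' = f(x) \& Q is written as the list of pairs (x_i, f_i) and the formula Q.\<close>
datatype ('v, 'f) fml =
    Eq "('v, 'f) trm" "('v, 'f) trm"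
  | Geq "('v, 'f) trm" "('v, 'f) trm"
  | Gt "('v, 'f) trm" "('v, 'f) trm"
  | And "('v, 'f) fml" "('v, 'f) fml"
  | Or "('v, 'f) fml" "('v, 'f) fml"
  | Not "('v, 'f) fml"
  | Forall "'v var" "('v, 'f) fml"
  | Exists "'v var" "('v, 'f) fml"
  | Box "('v \<times> ('v, 'f) trm) list" "('v, 'f) fml" "('v, 'f) fml"
  | Dia "('v \<times> ('v, 'f) trm) list" "('v, 'f) fml" "('v, 'f) fml"

definition Imp :: "('v, 'f) fml \<Rightarrow> ('v, 'f) fml \<Rightarrow> ('v, 'f) fml" where
  "Imp p q = Or (Not p) q"

definition Iff :: "('v, 'f) fml \<Rightarrow> ('v, 'f) fml \<Rightarrow> ('v, 'f) fml" where
  "Iff p q = And (Imp p q) (Imp q p)"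

definition VecEq :: "'v list \<Rightarrow> 'v list \<Rightarrow> ('v, 'f) fml" where
  "VecEq xs ys = foldr (\<lambda>(a, b) p. And (Eq (Var (Base a)) (Var (Base b))) p) (zip xs ys)
                    (Eq (Const 0) (Const 0))"

definition Neg :: "('v, 'f) trm \<Rightarrow> ('v, 'f) trm" where
  "Neg t = Times (Const (-1)) t"

fun dfree :: "('v, 'f) trm \<Rightarrow> bool" where
  "dfree (Var (Base _)) = True"
| "dfree (Var (Diff _)) = False"
| "dfree (Const _) = True"
| "dfree (Plus a b) = (dfree a \<and> dfree b)"
| "dfree (Times a b) = (dfree a \<and> dfree b)"
| "dfree (Fn _ ts) = (\<forall>t\<in>set ts. dfree t)"

fun wf_trm :: "('f \<Rightarrow> nat) \<Rightarrow> ('v, 'f) trm \<Rightarrow> bool" where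
  "wf_trm ar (Var _) = True"
| "wf_trm ar (Const _) = True"
| "wf_trm ar (Plus a b) = (wf_trm ar a \<and> wf_trm ar b)"
| "wf_trm ar (Times a b) = (wf_trm ar a \<and> wf_trm ar b)"
| "wf_trm ar (Fn f ts) = (length ts = ar f \<and> (\<forall>t\<in>set ts. wf_trm ar t))"

fun vars_trm :: "('v, 'f) trm \<Rightarrow> 'v set" where
  "vars_trm (Var (Base v)) = {v}"
| "vars_trm (Var (Diff v)) = {v}"
| "vars_trm (Const _) = {}"
| "vars_trm (Plus a b) = vars_trm a \<union> vars_trm b"
| "vars_trm (Times a b) = vars_trm a \<union> vars_trm b"
| "vars_trm (Fn _ ts) = (\<Union>t\<in>set ts. vars_trm t)"

fun var_name :: "'v var \<Rightarrow> 'v" where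
  "var_name (Base v) = v"
| "var_name (Diff v) = v"

fun vars_fml :: "('v, 'f) fml \<Rightarrow> 'v set" where
  "vars_fml (Eq a b) = vars_trm a \<union> vars_trm b"
| "vars_fml (Geq a b) = vars_trm a \<union> vars_trm b"
| "vars_fml (Gt a b) = vars_trm a \<union> vars_trm b"
| "vars_fml (And p q) = vars_fml p \<union> vars_fml q"
| "vars_fml (Or p q) = vars_fml p \<union> vars_fml q"
| "vars_fml (Not p) = vars_fml p"
| "vars_fml (Forall v p) = insert (var_name v) (vars_fml p)"
| "vars_fml (Exists v p) = insert (var_name v) (vars_fml p)"
| "vars_fml (Box ode q p) = set (map fst ode) \<union> (\<Union>e\<in>set ode. vars_trm (snd e)) \<union> vars_fml q \<union> vars_fml p"
| "vars_fml (Dia ode q p) = set (map fst ode) \<union> (\<Union>e\<in>set ode. vars_trm (snd e)) \<union> vars_fml q \<union> vars_fml p"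

fun semianalytic :: "('v, 'f) fml \<Rightarrow> bool" where
  "semianalytic (Eq a b) = (dfree a \<and> dfree b)"
| "semianalytic (Geq a b) = (dfree a \<and> dfree b)"
| "semianalytic (Gt a b) = (dfree a \<and> dfree b)"
| "semianalytic (And p q) = (semianalytic p \<and> semianalytic q)"
| "semianalytic (Or p q) = (semianalytic p \<and> semianalytic q)"
| "semianalytic (Not p) = semianalytic p"
| "semianalytic (Forall _ _) = False"
| "semianalytic (Exists _ _) = False"
| "semianalytic (Box _ _ _) = False"
| "semianalytic (Dia _ _ _) = False"

definition wf_ode :: "('f \<Rightarrow> nat) \<Rightarrow> ('v \<times> ('v, 'f) trm) list \<Rightarrow> bool" where
  "wf_ode ar ode \<longleftrightarrow> distinct (map fst ode) \<and> (\<forall>e\<in>set ode. dfree (snd e) \<and> wf_trm ar (snd e))"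

fun wf_fml :: "('f \<Rightarrow> nat) \<Rightarrow> ('v, 'f) fml \<Rightarrow> bool" where
  "wf_fml ar (Eq a b) = (wf_trm ar a \<and> wf_trm ar b)"
| "wf_fml ar (Geq a b) = (wf_trm ar a \<and> wf_trm ar b)"
| "wf_fml ar (Gt a b) = (wf_trm ar a \<and> wf_trm ar b)"
| "wf_fml ar (And p q) = (wf_fml ar p \<and> wf_fml ar q)"
| "wf_fml ar (Or p q) = (wf_fml ar p \<and> wf_fml ar q)"
| "wf_fml ar (Not p) = wf_fml ar p"
| "wf_fml ar (Forall _ p) = wf_fml ar p"
| "wf_fml ar (Exists _ p) = wf_fml ar p"
| "wf_fml ar (Box ode q p) = (wf_ode ar ode \<and> semianalytic q \<and> wf_fml ar q \<and> wf_fml ar p)"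
| "wf_fml ar (Dia ode q p) = (wf_ode ar ode \<and> semianalytic q \<and> wf_fml ar q \<and> wf_fml ar p)"

definition ren :: "'v list \<Rightarrow> 'v list \<Rightarrow> 'v \<Rightarrow> 'v" where
  "ren xs ys v = (case map_of (zip xs ys) v of Some w \<Rightarrow> w | None \<Rightarrow> v)"

fun rename_var :: "('v \<Rightarrow> 'v) \<Rightarrow> 'v var \<Rightarrow> 'v var" where
  "rename_var \<sigma> (Base v) = Base (\<sigma> v)"
| "rename_var \<sigma> (Diff v) = Diff (\<sigma> v)"

fun rename_trm :: "('v \<Rightarrow> 'v) \<Rightarrow> ('v, 'f) trm \<Rightarrow> ('v, 'f) trm" where
  "rename_trm \<sigma> (Var v) = Var (rename_var \<sigma> v)"
| "rename_trm \<sigma> (Const c) = Const c"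
| "rename_trm \<sigma> (Plus a b) = Plus (rename_trm \<sigma> a) (rename_trm \<sigma> b)"
| "rename_trm \<sigma> (Times a b) = Times (rename_trm \<sigma> a) (rename_trm \<sigma> b)"
| "rename_trm \<sigma> (Fn f ts) = Fn f (map (rename_trm \<sigma>) ts)"

fun rename_fml :: "('v \<Rightarrow> 'v) \<Rightarrow> ('v, 'f) fml \<Rightarrow> ('v, 'f) fml" where
  "rename_fml \<sigma> (Eq a b) = Eq (rename_trm \<sigma> a) (rename_trm \<sigma> b)"
| "rename_fml \<sigma> (Geq a b) = Geq (rename_trm \<sigma> a) (rename_trm \<sigma> b)"
| "rename_fml \<sigma> (Gt a b) = Gt (rename_trm \<sigma> a) (rename_trm \<sigma> b)"
| "rename_fml \<sigma> (And p q) = And (rename_fml \<sigma> p) (rename_fml \<sigma> q)"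
| "rename_fml \<sigma> (Or p q) = Or (rename_fml \<sigma> p) (rename_fml \<sigma> q)"
| "rename_fml \<sigma> (Not p) = Not (rename_fml \<sigma> p)"
| "rename_fml \<sigma> (Forall v p) = Forall (rename_var \<sigma> v) (rename_fml \<sigma> p)"
| "rename_fml \<sigma> (Exists v p) = Exists (rename_var \<sigma> v) (rename_fml \<sigma> p)"
| "rename_fml \<sigma> (Box ode q p) = Box (map (\<lambda>(x, t). (\<sigma> x, rename_trm \<sigma> t)) ode) (rename_fml \<sigma> q) (rename_fml \<sigma> p)"
| "rename_fml \<sigma> (Dia ode q p) = Dia (map (\<lambda>(x, t). (\<sigma> x, rename_trm \<sigma> t)) ode) (rename_fml \<sigma> q) (rename_fml \<sigma> p)"

fun eval :: "('f \<Rightarrow> real list \<Rightarrow> real) \<Rightarrow> 'v state \<Rightarrow> ('v, 'f) trm \<Rightarrow> real" where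
  "eval I \<omega> (Var v) = \<omega> v"
| "eval I \<omega> (Const c) = of_rat c"
| "eval I \<omega> (Plus a b) = eval I \<omega> a + eval I \<omega> b"
| "eval I \<omega> (Times a b) = eval I \<omega> a * eval I \<omega> b"
| "eval I \<omega> (Fn f ts) = I f (map (eval I \<omega>) ts)"

definition ode_rel :: "('f \<Rightarrow> real list \<Rightarrow> real) \<Rightarrow> ('v \<times> ('v, 'f) trm) list \<Rightarrow>
    ('v state \<Rightarrow> bool) \<Rightarrow> 'v state \<Rightarrow> 'v state \<Rightarrow> bool" where
  "ode_rel I ode Q \<omega> \<nu> \<longleftrightarrow> (\<exists>T::real. T \<ge> 0 \<and> (\<exists>\<phi> :: real \<Rightarrow> 'v state.
      (\<forall>v. v \<notin> Diff ` set (map fst ode) \<longrightarrow> \<phi> 0 v = \<omega> v) \<and>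
      \<phi> T = \<nu> \<and>
      (\<forall>\<zeta>\<in>{0..T}.
         (\<forall>(x, f)\<in>set ode. \<phi> \<zeta> (Diff x) = eval I (\<phi> \<zeta>) f) \<and>
         Q (\<phi> \<zeta>) \<and>
         (\<forall>v. v \<notin> Base ` set (map fst ode) \<longrightarrow> v \<notin> Diff ` set (map fst ode) \<longrightarrow> \<phi> \<zeta> v = \<phi> 0 v) \<and>
         (T > 0 \<longrightarrow> (\<forall>x\<in>set (map fst ode).
            ((\<lambda>t. \<phi> t (Base x)) has_real_derivative \<phi> \<zeta> (Diff x)) (at \<zeta> within {0..T}))))))"

fun sem :: "('f \<Rightarrow> real list \<Rightarrow> real) \<Rightarrow> ('v, 'f) fml \<Rightarrow> 'v state \<Rightarrow> bool" where
  "sem I (Eq a b) \<omega> = (eval I \<omega> a = eval I \<omega> b)"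
| "sem I (Geq a b) \<omega> = (eval I \<omega> a \<ge> eval I \<omega> b)"
| "sem I (Gt a b) \<omega> = (eval I \<omega> a > eval I \<omega> b)"
| "sem I (And p q) \<omega> = (sem I p \<omega> \<and> sem I q \<omega>)"
| "sem I (Or p q) \<omega> = (sem I p \<omega> \<or> sem I q \<omega>)"
| "sem I (Not p) \<omega> = (\<not> sem I p \<omega>)"
| "sem I (Forall v p) \<omega> = (\<forall>r. sem I p (\<omega>(v := r)))"
| "sem I (Exists v p) \<omega> = (\<exists>r. sem I p (\<omega>(v := r)))"
| "sem I (Box ode q p) \<omega> = (\<forall>\<nu>. ode_rel I ode (sem I q) \<omega> \<nu> \<longrightarrow> sem I p \<nu>)"
| "sem I (Dia ode q p) \<omega> = (\<exists>\<nu>. ode_rel I ode (sem I q) \<omega> \<nu> \<and> sem I p \<nu>)"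

definition valid :: "('f \<Rightarrow> real list \<Rightarrow> real) \<Rightarrow> ('v, 'f) fml \<Rightarrow> bool" where
  "valid I p \<longleftrightarrow> (\<forall>\<omega>. sem I p \<omega>)"

end

theory Submission
  imports Defs "HOL-Analysis.Analysis"
begin


lemma eval_coinc:
  "dfree t \<Longrightarrow> (\<And>v. v \<in> vars_trm t \<Longrightarrow> s1 (Base v) = s2 (Base v)) \<Longrightarrow> eval I s1 t = eval I s2 t"
proof (induction t)
  case (Var x)
  then show ?case by (cases x) auto
next
  case (Fn f ts)
  have "\<And>x. x \<in> set ts \<Longrightarrow> eval I s1 x = eval I s2 x" using Fn by auto
  then have "map (eval I s1) ts = map (eval I s2) ts" by (simp cong: map_cong)
  then show ?case by (metis eval.simps(5))
qed auto

lemma sem_coinc: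
  "semianalytic q \<Longrightarrow> (\<And>v. v \<in> vars_fml q \<Longrightarrow> s1 (Base v) = s2 (Base v)) \<Longrightarrow> sem I q s1 = sem I q s2"
proof (induction q)
  case (Eq a b) then show ?case using eval_coinc[of a s1 s2 I] eval_coinc[of b s1 s2 I] by auto
next
  case (Geq a b) then show ?case using eval_coinc[of a s1 s2 I] eval_coinc[of b s1 s2 I] by auto
next
  case (Gt a b) then show ?case using eval_coinc[of a s1 s2 I] eval_coinc[of b s1 s2 I] by auto
qed auto

lemma eval_rename: "eval I s (rename_trm \<sigma> t) = eval I (s \<circ> rename_var \<sigma>) t"
proof (induction t)
  case (Fn f ts)
  then have "map (eval I s) (map (rename_trm \<sigma>) ts) = map (eval I (s \<circ> rename_var \<sigma>)) ts" by (simp add: comp_def)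
  then show ?case by (metis eval.simps(5) rename_trm.simps(5) map_map)
qed auto

lemma sem_rename: "semianalytic q \<Longrightarrow> sem I (rename_fml \<sigma> q) s = sem I q (s \<circ> rename_var \<sigma>)"
  by (induction q) (auto simp: eval_rename)

lemma sem_VecEq: "length xs = length ys \<Longrightarrow>
  sem I (VecEq xs ys) s \<longleftrightarrow> (\<forall>i<length xs. s (Base (xs!i)) = s (Base (ys!i)))"
proof (induction xs arbitrary: ys)
  case Nil then show ?case by (simp add: VecEq_def)
next
  case (Cons a xs)
  then obtain b ys' where ys: "ys = b # ys'" by (cases ys) auto
  have "sem I (VecEq (a#xs) ys) s \<longleftrightarrow> s (Base a) = s (Base b) \<and> sem I (VecEq xs ys') s"
    by (simp add: VecEq_def ys)
  also have "\<dots> \<longleftrightarrow> (\<forall>i<length (a#xs). s (Base ((a#xs)!i)) = s (Base (ys!i)))"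
    using Cons by (auto simp: ys nth_Cons split: nat.splits)
  finally show ?case .
qed

lemma sem_Iff[simp]: "sem I (Iff p q) s \<longleftrightarrow> (sem I p s \<longleftrightarrow> sem I q s)"
  by (auto simp: Iff_def Imp_def)
lemma sem_Imp[simp]: "sem I (Imp p q) s \<longleftrightarrow> (sem I p s \<longrightarrow> sem I q s)"
  by (auto simp: Imp_def)

definition sol :: "('f \<Rightarrow> real list \<Rightarrow> real) \<Rightarrow> ('v \<times> ('v, 'f) trm) list \<Rightarrow> 'v state \<Rightarrow> real \<Rightarrow> (real \<Rightarrow> 'v state) \<Rightarrow> bool" where
  "sol I ode \<omega> T \<phi> \<longleftrightarrow> T \<ge> 0 \<and>
      (\<forall>v. v \<notin> Diff ` set (map fst ode) \<longrightarrow> \<phi> 0 v = \<omega> v) \<and>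
      (\<forall>\<zeta>\<in>{0..T}.
         (\<forall>(x, f)\<in>set ode. \<phi> \<zeta> (Diff x) = eval I (\<phi> \<zeta>) f) \<and>
         (\<forall>v. v \<notin> Base ` set (map fst ode) \<longrightarrow> v \<notin> Diff ` set (map fst ode) \<longrightarrow> \<phi> \<zeta> v = \<phi> 0 v) \<and>
         (T > 0 \<longrightarrow> (\<forall>x\<in>set (map fst ode).
            ((\<lambda>t. \<phi> t (Base x)) has_real_derivative \<phi> \<zeta> (Diff x)) (at \<zeta> within {0..T}))))"

lemma ode_rel_sol: "ode_rel I ode Q \<omega> \<nu> \<longleftrightarrow> (\<exists>T \<phi>. sol I ode \<omega> T \<phi> \<and> \<phi> T = \<nu> \<and> (\<forall>\<zeta>\<in>{0..T}. Q (\<phi> \<zeta>)))"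
  unfolding ode_rel_def sol_def by blast



definition dl :: "real list \<Rightarrow> real list \<Rightarrow> real" where
  "dl xs ys = (\<Sum>i<length xs. \<bar>xs!i - ys!i\<bar>)"

lemma dl_comp: "i < length xs \<Longrightarrow> \<bar>xs!i - ys!i\<bar> \<le> dl xs ys"
  unfolding dl_def by (rule member_le_sum) auto

lemma dl_nonneg: "0 \<le> dl xs ys"
  unfolding dl_def by (rule sum_nonneg) auto

lemma mvt_bound:
  fixes G :: "real \<Rightarrow> real"
  assumes d: "\<And>t. min a b \<le> t \<Longrightarrow> t \<le> max a b \<Longrightarrow> (G has_real_derivative G' t) (at t)"
    and b: "\<And>t. min a b \<le> t \<Longrightarrow> t \<le> max a b \<Longrightarrow> \<bar>G' t\<bar> \<le> B"
  shows "\<bar>G b - G a\<bar> \<le> B * \<bar>b - a\<bar>"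
proof -
  consider "a < b" | "a = b" | "b < a" by linarith
  then show ?thesis
  proof cases
    case 1
    then obtain z where z: "a < z" "z < b" "G b - G a = (b - a) * G' z"
      using MVT2[of a b G G'] d by force
    have "\<bar>G' z\<bar> \<le> B" using b[of z] z 1 by auto
    then show ?thesis using z 1 by (simp add: abs_mult mult.commute mult_left_mono)
  next
    case 2 then show ?thesis using b[of a] by auto
  next
    case 3
    then obtain z where z: "b < z" "z < a" "G a - G b = (a - b) * G' z"
      using MVT2[of b a G G'] d by force
    have "\<bar>G' z\<bar> \<le> B" using b[of z] z 3 by auto
    then show ?thesis using z 3 by (simp add: abs_mult mult.commute mult_left_mono abs_minus_commute)
  qed
qed

lemma telescope_abs:
  fixes F :: "nat \<Rightarrow> real"
  shows "\<bar>F 0 - F m\<bar> \<le> (\<Sum>j<m. \<bar>F j - F (Suc j)\<bar>)"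
proof (induction m)
  case (Suc m)
  have "\<bar>F 0 - F (Suc m)\<bar> \<le> \<bar>F 0 - F m\<bar> + \<bar>F m - F (Suc m)\<bar>" by linarith
  then show ?case using Suc by simp
qed simp

lemma smooth_lip:
  assumes sm: "smooth_len k g" and len: "length x0 = k"
  shows "\<exists>\<delta>>0. \<exists>L\<ge>0. \<forall>ys zs. length ys = k \<longrightarrow> length zs = k \<longrightarrow> dl ys x0 < \<delta> \<longrightarrow> dl zs x0 < \<delta> \<longrightarrow>
           \<bar>g ys - g zs\<bar> \<le> L * dl ys zs"
proof -
  from sm have "\<forall>i<k. \<exists>h. (\<forall>xs. length xs = k \<longrightarrow>
        ((\<lambda>t. g (xs[i := xs ! i + t])) has_real_derivative h xs) (at 0)) \<and> smooth_len k h"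
    by (cases rule: smooth_len.cases) auto
  then obtain H where H: "\<And>i. i < k \<Longrightarrow> (\<forall>xs. length xs = k \<longrightarrow>
        ((\<lambda>t. g (xs[i := xs ! i + t])) has_real_derivative H i xs) (at 0)) \<and> smooth_len k (H i)"
    by metis
  have "\<forall>i<k. \<exists>d>0. \<forall>ys. length ys = k \<longrightarrow> (\<forall>j<k. \<bar>ys ! j - x0 ! j\<bar> < d) \<longrightarrow> \<bar>H i ys - H i x0\<bar> < 1"
  proof (intro allI impI)
    fix i assume "i < k"
    then have "cont_len k (H i)" using H[of i] by (auto elim: smooth_len.cases)
    then show "\<exists>d>0. \<forall>ys. length ys = k \<longrightarrow> (\<forall>j<k. \<bar>ys ! j - x0 ! j\<bar> < d) \<longrightarrow> \<bar>H i ys - H i x0\<bar> < 1"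
      unfolding cont_len_def using len by auto
  qed
  then obtain D where D: "\<And>i. i < k \<Longrightarrow> D i > 0 \<and> (\<forall>ys. length ys = k \<longrightarrow> (\<forall>j<k. \<bar>ys ! j - x0 ! j\<bar> < D i) \<longrightarrow> \<bar>H i ys - H i x0\<bar> < 1)"
    by metis
  define \<delta> where "\<delta> = Min (insert 1 (D ` {..<k}))"
  have \<delta>pos: "\<delta> > 0" unfolding \<delta>_def using D by (auto simp: Min_gr_iff)
  have \<delta>le: "\<delta> \<le> D i" if "i < k" for i unfolding \<delta>_def using that by (auto intro: Min_le)
  define L where "L = (\<Sum>i<k. \<bar>H i x0\<bar> + 1)"
  have Lge: "\<bar>H i x0\<bar> + 1 \<le> L" if "i < k" for i
    unfolding L_def using that by (intro member_le_sum) auto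
  have L0: "L \<ge> 0" unfolding L_def by (intro sum_nonneg) auto
  have "\<forall>ys zs. length ys = k \<longrightarrow> length zs = k \<longrightarrow> dl ys x0 < \<delta> \<longrightarrow> dl zs x0 < \<delta> \<longrightarrow>
           \<bar>g ys - g zs\<bar> \<le> L * dl ys zs"
  proof (intro allI impI)
    fix ys zs assume ly: "length ys = k" and lz: "length zs = k" and dy: "dl ys x0 < \<delta>" and dz: "dl zs x0 < \<delta>"
    have cy: "\<bar>ys!i - x0!i\<bar> < \<delta>" if "i < k" for i using dl_comp[of i ys x0] ly that dy by auto
    have cz: "\<bar>zs!i - x0!i\<bar> < \<delta>" if "i < k" for i using dl_comp[of i zs x0] lz that dz by auto
    define w where "w j = take j zs @ drop j ys" for j
    have lw: "length (w j) = k" if "j \<le> k" for j using that ly lz by (simp add: w_def)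
    have nw: "w j ! i = (if i < j then zs!i else ys!i)" if "j \<le> k" "i < k" for i j
      using that ly lz by (auto simp: w_def nth_append)
    have w0: "w 0 = ys" by (simp add: w_def)
    have wk: "w k = zs" using lz ly by (simp add: w_def)
    have wS: "w (Suc j) = (w j)[j := zs!j]" if "j < k" for j
      by (rule nth_equalityI) (use that lw nw in \<open>auto simp: nth_list_update\<close>)
    have step: "\<bar>g (w j) - g (w (Suc j))\<bar> \<le> (\<bar>H j x0\<bar> + 1) * \<bar>ys!j - zs!j\<bar>" if jk: "j < k" for j
    proof -
      define G where "G t = g ((w j)[j := t])" for t
      have "w j ! j = ys!j" using nw[of j j] jk by simp
      then have "(w j)[j := ys!j] = w j" by (metis list_update_id)
      then have Gy: "G (ys!j) = g (w j)" unfolding G_def by simp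
      have Gz: "G (zs!j) = g (w (Suc j))" unfolding G_def using wS jk by simp
      have deriv: "(G has_real_derivative H j ((w j)[j := t])) (at t)" for t
      proof -
        have l: "length ((w j)[j := t]) = k" using lw jk by simp
        have "((\<lambda>\<tau>. g (((w j)[j := t])[j := ((w j)[j := t]) ! j + \<tau>])) has_real_derivative H j ((w j)[j := t])) (at 0)"
          using H[OF jk] l by blast
        moreover have "((w j)[j := t])[j := ((w j)[j := t]) ! j + \<tau>] = (w j)[j := \<tau> + t]" for \<tau>
          using l jk by (simp add: add.commute)
        ultimately have "((\<lambda>\<tau>. G (\<tau> + t)) has_real_derivative H j ((w j)[j := t])) (at 0)"
          unfolding G_def by simp
        then show ?thesis using DERIV_shift[of G "H j ((w j)[j := t])" 0 t] by simp
      qed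
      have bound: "\<bar>H j ((w j)[j := t])\<bar> \<le> \<bar>H j x0\<bar> + 1" if t: "min (ys!j) (zs!j) \<le> t" "t \<le> max (ys!j) (zs!j)" for t
      proof -
        have l: "length ((w j)[j := t]) = k" using lw jk by simp
        have "\<bar>(w j)[j := t] ! i - x0 ! i\<bar> < D j" if ik: "i < k" for i
        proof (cases "i = j")
          case True
          have "\<bar>t - x0!j\<bar> < \<delta>" using cy[OF jk] cz[OF jk] t by (auto simp: abs_less_iff min_def max_def split: if_splits)
          then show ?thesis using True l ik \<delta>le[OF jk] by simp
        next
          case False
          then have "(w j)[j := t] ! i = w j ! i" by simp
          then show ?thesis using nw[of j i] jk ik cy[OF ik] cz[OF ik] \<delta>le[OF jk] by auto
        qed
        then have "\<bar>H j ((w j)[j := t]) - H j x0\<bar> < 1" using D[OF jk] l by blast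
        then show ?thesis by linarith
      qed
      have "\<bar>G (zs!j) - G (ys!j)\<bar> \<le> (\<bar>H j x0\<bar> + 1) * \<bar>zs!j - ys!j\<bar>"
        by (rule mvt_bound[where G' = "\<lambda>t. H j ((w j)[j := t])"]) (use deriv bound in auto)
      then show ?thesis using Gy Gz by (simp add: abs_minus_commute)
    qed
    have "\<bar>g ys - g zs\<bar> \<le> (\<Sum>j<k. \<bar>g (w j) - g (w (Suc j))\<bar>)"
      using telescope_abs[of "\<lambda>j. g (w j)" k] w0 wk by simp
    also have "\<dots> \<le> (\<Sum>j<k. L * \<bar>ys!j - zs!j\<bar>)"
    proof (rule sum_mono)
      fix j assume "j \<in> {..<k}"
      then have "j < k" by simp
      then show "\<bar>g (w j) - g (w (Suc j))\<bar> \<le> L * \<bar>ys!j - zs!j\<bar>"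
        using step[of j] Lge[of j] by (meson abs_ge_zero mult_right_mono order_trans)
    qed
    also have "\<dots> = L * dl ys zs" unfolding dl_def using ly by (simp add: sum_distrib_left)
    finally show "\<bar>g ys - g zs\<bar> \<le> L * dl ys zs" .
  qed
  then show ?thesis using \<delta>pos L0 by blast
qed



definition dV :: "'v set \<Rightarrow> 'v state \<Rightarrow> 'v state \<Rightarrow> real" where
  "dV V s1 s2 = (\<Sum>v\<in>V. \<bar>s1 (Base v) - s2 (Base v)\<bar>)"

definition loclip :: "'v set \<Rightarrow> ('v state \<Rightarrow> real) \<Rightarrow> bool" where
  "loclip V h \<longleftrightarrow> (\<forall>s. \<exists>\<delta>>0. \<exists>L\<ge>0. \<forall>s1 s2. dV V s1 s < \<delta> \<longrightarrow> dV V s2 s < \<delta> \<longrightarrow>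
      \<bar>h s1 - h s2\<bar> \<le> L * dV V s1 s2)"

lemma dV_nonneg: "0 \<le> dV V s1 s2" unfolding dV_def by (rule sum_nonneg) auto
lemma dV_sym: "dV V s1 s2 = dV V s2 s1" unfolding dV_def by (simp add: abs_minus_commute)
lemma dV_self[simp]: "dV V s s = 0" unfolding dV_def by simp
lemma dV_comp: "finite V \<Longrightarrow> v \<in> V \<Longrightarrow> \<bar>s1 (Base v) - s2 (Base v)\<bar> \<le> dV V s1 s2"
  unfolding dV_def by (rule member_le_sum) auto
lemma dV_tri: "dV V s1 s3 \<le> dV V s1 s2 + dV V s2 s3"
  unfolding dV_def sum.distrib[symmetric] by (rule sum_mono) linarith

lemma loclipE:
  assumes "loclip V h"
  obtains \<delta> L where "\<delta> > 0" "L \<ge> 0" "\<And>s1 s2. dV V s1 s < \<delta> \<Longrightarrow> dV V s2 s < \<delta> \<Longrightarrow> \<bar>h s1 - h s2\<bar> \<le> L * dV V s1 s2"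
  using assms unfolding loclip_def by metis

lemma loclip_const: "loclip V (\<lambda>s. c)"
  unfolding loclip_def
proof
  fix s :: "'a state"
  have "\<forall>s1 s2. dV V s1 s < 1 \<longrightarrow> dV V s2 s < 1 \<longrightarrow> \<bar>c - c\<bar> \<le> 0 * dV V s1 s2" by simp
  then show "\<exists>\<delta>>0. \<exists>L\<ge>0. \<forall>s1 s2. dV V s1 s < \<delta> \<longrightarrow> dV V s2 s < \<delta> \<longrightarrow> \<bar>c - c\<bar> \<le> L * dV V s1 s2"
    by (intro exI[of _ "1::real"] conjI zero_less_one exI[of _ "0::real"]) auto
qed

lemma loclip_var: "finite V \<Longrightarrow> v \<in> V \<Longrightarrow> loclip V (\<lambda>s. s (Base v))"
  unfolding loclip_def by (auto intro!: exI[of _ 1] dV_comp)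

lemma loclip_add:
  assumes "loclip V f" "loclip V g" shows "loclip V (\<lambda>s. f s + g s)"
  unfolding loclip_def
proof
  fix s
  obtain d1 L1 where 1: "d1 > 0" "L1 \<ge> 0" "\<And>s1 s2. dV V s1 s < d1 \<Longrightarrow> dV V s2 s < d1 \<Longrightarrow> \<bar>f s1 - f s2\<bar> \<le> L1 * dV V s1 s2"
    using loclipE[OF assms(1)] by metis
  obtain d2 L2 where 2: "d2 > 0" "L2 \<ge> 0" "\<And>s1 s2. dV V s1 s < d2 \<Longrightarrow> dV V s2 s < d2 \<Longrightarrow> \<bar>g s1 - g s2\<bar> \<le> L2 * dV V s1 s2"
    using loclipE[OF assms(2)] by metis
  have "\<forall>s1 s2. dV V s1 s < min d1 d2 \<longrightarrow> dV V s2 s < min d1 d2 \<longrightarrow> \<bar>f s1 + g s1 - (f s2 + g s2)\<bar> \<le> (L1 + L2) * dV V s1 s2"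
  proof (intro allI impI)
    fix s1 s2 assume a: "dV V s1 s < min d1 d2" "dV V s2 s < min d1 d2"
    have "\<bar>f s1 + g s1 - (f s2 + g s2)\<bar> \<le> \<bar>f s1 - f s2\<bar> + \<bar>g s1 - g s2\<bar>" by linarith
    also have "\<dots> \<le> L1 * dV V s1 s2 + L2 * dV V s1 s2" using 1(3) 2(3) a by (intro add_mono) auto
    finally show "\<bar>f s1 + g s1 - (f s2 + g s2)\<bar> \<le> (L1 + L2) * dV V s1 s2" by (simp add: algebra_simps)
  qed
  then show "\<exists>\<delta>>0. \<exists>L\<ge>0. \<forall>s1 s2. dV V s1 s < \<delta> \<longrightarrow> dV V s2 s < \<delta> \<longrightarrow> \<bar>f s1 + g s1 - (f s2 + g s2)\<bar> \<le> L * dV V s1 s2"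
    using 1 2 by (intro exI[of _ "min d1 d2"]) (auto intro!: exI[of _ "L1 + L2"])
qed

lemma loclip_mult:
  assumes "loclip V f" "loclip V g" shows "loclip V (\<lambda>s. f s * g s)"
  unfolding loclip_def
proof
  fix s
  obtain d1 L1 where 1: "d1 > 0" "L1 \<ge> 0" "\<And>s1 s2. dV V s1 s < d1 \<Longrightarrow> dV V s2 s < d1 \<Longrightarrow> \<bar>f s1 - f s2\<bar> \<le> L1 * dV V s1 s2"
    using loclipE[OF assms(1)] by metis
  obtain d2 L2 where 2: "d2 > 0" "L2 \<ge> 0" "\<And>s1 s2. dV V s1 s < d2 \<Longrightarrow> dV V s2 s < d2 \<Longrightarrow> \<bar>g s1 - g s2\<bar> \<le> L2 * dV V s1 s2"
    using loclipE[OF assms(2)] by metis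
  define A where "A = \<bar>f s\<bar> + L1 * d1"
  define B where "B = \<bar>g s\<bar> + L2 * d2"
  have A0: "A \<ge> 0" "B \<ge> 0" using 1 2 by (auto simp: A_def B_def)
  have "\<forall>s1 s2. dV V s1 s < min d1 d2 \<longrightarrow> dV V s2 s < min d1 d2 \<longrightarrow> \<bar>f s1 * g s1 - f s2 * g s2\<bar> \<le> (A * L2 + B * L1) * dV V s1 s2"
  proof (intro allI impI)
    fix s1 s2 assume a: "dV V s1 s < min d1 d2" "dV V s2 s < min d1 d2"
    have "\<bar>f s1 - f s\<bar> \<le> L1 * dV V s1 s" using 1(3)[of s1 s] a 1(1) by auto
    also have "\<dots> \<le> L1 * d1" using a 1(2) by (intro mult_left_mono) auto
    finally have fA: "\<bar>f s1\<bar> \<le> A" unfolding A_def by linarith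
    have "\<bar>g s2 - g s\<bar> \<le> L2 * dV V s2 s" using 2(3)[of s2 s] a 2(1) by auto
    also have "\<dots> \<le> L2 * d2" using a 2(2) by (intro mult_left_mono) auto
    finally have gB: "\<bar>g s2\<bar> \<le> B" unfolding B_def by linarith
    have e: "f s1 * g s1 - f s2 * g s2 = f s1 * (g s1 - g s2) + g s2 * (f s1 - f s2)" by (simp add: algebra_simps)
    have "\<bar>f s1 * (g s1 - g s2)\<bar> \<le> A * (L2 * dV V s1 s2)"
      unfolding abs_mult using fA 2(3) a A0 by (intro mult_mono) auto
    moreover have "\<bar>g s2 * (f s1 - f s2)\<bar> \<le> B * (L1 * dV V s1 s2)"
      unfolding abs_mult using gB 1(3) a A0 by (intro mult_mono) auto
    ultimately show "\<bar>f s1 * g s1 - f s2 * g s2\<bar> \<le> (A * L2 + B * L1) * dV V s1 s2"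
      unfolding e by (simp add: algebra_simps)
  qed
  then show "\<exists>\<delta>>0. \<exists>L\<ge>0. \<forall>s1 s2. dV V s1 s < \<delta> \<longrightarrow> dV V s2 s < \<delta> \<longrightarrow> \<bar>f s1 * g s1 - f s2 * g s2\<bar> \<le> L * dV V s1 s2"
    using 1 2 A0 by (intro exI[of _ "min d1 d2"]) (auto intro!: exI[of _ "A * L2 + B * L1"])
qed

lemma dl_Cons: "length xs = length ys \<Longrightarrow> dl (a # xs) (b # ys) = \<bar>a - b\<bar> + dl xs ys"
  unfolding dl_def by (simp add: sum.lessThan_Suc_shift del: sum.lessThan_Suc)

lemma loclip_list:
  assumes "\<forall>h\<in>set hs. loclip V h"
  shows "\<exists>\<delta>>0. \<exists>L\<ge>0. \<forall>s1 s2. dV V s1 s < \<delta> \<longrightarrow> dV V s2 s < \<delta> \<longrightarrow>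
     dl (map (\<lambda>h. h s1) hs) (map (\<lambda>h. h s2) hs) \<le> L * dV V s1 s2"
  using assms
proof (induction hs)
  case Nil
  have "\<forall>s1 s2. dV V s1 s < 1 \<longrightarrow> dV V s2 s < 1 \<longrightarrow> dl (map (\<lambda>h. h s1) []) (map (\<lambda>h. h s2) []) \<le> 0 * dV V s1 s2"
    by (simp add: dl_def)
  then show ?case by (intro exI[of _ "1::real"] conjI zero_less_one exI[of _ "0::real"]) auto
next
  case (Cons h hs)
  obtain d1 L1 where 1: "d1 > 0" "L1 \<ge> 0" "\<And>s1 s2. dV V s1 s < d1 \<Longrightarrow> dV V s2 s < d1 \<Longrightarrow> \<bar>h s1 - h s2\<bar> \<le> L1 * dV V s1 s2"
    using loclipE[of V h s] Cons.prems by auto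
  obtain d2 L2 where 2: "d2 > 0" "L2 \<ge> 0" "\<And>s1 s2. dV V s1 s < d2 \<Longrightarrow> dV V s2 s < d2 \<Longrightarrow>
     dl (map (\<lambda>h. h s1) hs) (map (\<lambda>h. h s2) hs) \<le> L2 * dV V s1 s2"
    using Cons by auto
  have "\<forall>s1 s2. dV V s1 s < min d1 d2 \<longrightarrow> dV V s2 s < min d1 d2 \<longrightarrow>
     dl (map (\<lambda>h. h s1) (h#hs)) (map (\<lambda>h. h s2) (h#hs)) \<le> (L1 + L2) * dV V s1 s2"
  proof (intro allI impI)
    fix s1 s2 assume a: "dV V s1 s < min d1 d2" "dV V s2 s < min d1 d2"
    have "dl (map (\<lambda>h. h s1) (h#hs)) (map (\<lambda>h. h s2) (h#hs)) = \<bar>h s1 - h s2\<bar> + dl (map (\<lambda>h. h s1) hs) (map (\<lambda>h. h s2) hs)"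
      by (simp add: dl_Cons)
    also have "\<dots> \<le> L1 * dV V s1 s2 + L2 * dV V s1 s2" using 1(3) 2(3) a by (intro add_mono) auto
    finally show "dl (map (\<lambda>h. h s1) (h#hs)) (map (\<lambda>h. h s2) (h#hs)) \<le> (L1 + L2) * dV V s1 s2" by (simp add: algebra_simps)
  qed
  then show ?case using 1 2 by (intro exI[of _ "min d1 d2"]) (auto intro!: exI[of _ "L1 + L2"])
qed

lemma loclip_compose:
  assumes sm: "smooth_len (length hs) g" and hs: "\<forall>h\<in>set hs. loclip V h"
  shows "loclip V (\<lambda>s. g (map (\<lambda>h. h s) hs))"
  unfolding loclip_def
proof
  fix s
  obtain dg Lg where g: "dg > 0" "Lg \<ge> 0" "\<And>ys zs. length ys = length hs \<Longrightarrow> length zs = length hs \<Longrightarrow>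
      dl ys (map (\<lambda>h. h s) hs) < dg \<Longrightarrow> dl zs (map (\<lambda>h. h s) hs) < dg \<Longrightarrow> \<bar>g ys - g zs\<bar> \<le> Lg * dl ys zs"
    using smooth_lip[OF sm, of "map (\<lambda>h. h s) hs"] by auto
  obtain dl' Ll where l: "dl' > 0" "Ll \<ge> 0" "\<And>s1 s2. dV V s1 s < dl' \<Longrightarrow> dV V s2 s < dl' \<Longrightarrow>
     dl (map (\<lambda>h. h s1) hs) (map (\<lambda>h. h s2) hs) \<le> Ll * dV V s1 s2"
    using loclip_list[OF hs, of s] by auto
  define d where "d = min dl' (dg / (Ll + 1))"
  have d0: "d > 0" using l g by (simp add: d_def)
  have near: "dl (map (\<lambda>h. h s1) hs) (map (\<lambda>h. h s) hs) < dg" if "dV V s1 s < d" for s1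
  proof -
    have "dl (map (\<lambda>h. h s1) hs) (map (\<lambda>h. h s) hs) \<le> Ll * dV V s1 s" using l(3)[of s1 s] that l(1) by (auto simp: d_def)
    also have "\<dots> \<le> (Ll + 1) * dV V s1 s" using dV_nonneg[of V s1 s] by (simp add: algebra_simps)
    also have "\<dots> < (Ll + 1) * (dg / (Ll + 1))" using that l(2) by (intro mult_strict_left_mono) (auto simp: d_def)
    also have "\<dots> = dg" using l(2) by simp
    finally show ?thesis .
  qed
  have "\<forall>s1 s2. dV V s1 s < d \<longrightarrow> dV V s2 s < d \<longrightarrow> \<bar>g (map (\<lambda>h. h s1) hs) - g (map (\<lambda>h. h s2) hs)\<bar> \<le> (Lg * Ll) * dV V s1 s2"
  proof (intro allI impI)
    fix s1 s2 assume a: "dV V s1 s < d" "dV V s2 s < d"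
    have "\<bar>g (map (\<lambda>h. h s1) hs) - g (map (\<lambda>h. h s2) hs)\<bar> \<le> Lg * dl (map (\<lambda>h. h s1) hs) (map (\<lambda>h. h s2) hs)"
      using g(3) near a by auto
    also have "\<dots> \<le> Lg * (Ll * dV V s1 s2)" using l(3) a g(2) by (intro mult_left_mono) (auto simp: d_def)
    finally show "\<bar>g (map (\<lambda>h. h s1) hs) - g (map (\<lambda>h. h s2) hs)\<bar> \<le> (Lg * Ll) * dV V s1 s2" by (simp add: algebra_simps)
  qed
  then show "\<exists>\<delta>>0. \<exists>L\<ge>0. \<forall>s1 s2. dV V s1 s < \<delta> \<longrightarrow> dV V s2 s < \<delta> \<longrightarrow>
     \<bar>g (map (\<lambda>h. h s1) hs) - g (map (\<lambda>h. h s2) hs)\<bar> \<le> L * dV V s1 s2"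
    using d0 g l by (intro exI[of _ d]) (auto intro!: exI[of _ "Lg * Ll"])
qed

lemma eval_loclip:
  assumes sm: "\<forall>g. smooth_len (ar g) (I g)" and V: "finite V"
  shows "dfree t \<Longrightarrow> wf_trm ar t \<Longrightarrow> vars_trm t \<subseteq> V \<Longrightarrow> loclip V (\<lambda>s. eval I s t)"
proof (induction t)
  case (Var x) then show ?case using V by (cases x) (auto intro: loclip_var)
next
  case (Const c) then show ?case by (simp add: loclip_const)
next
  case (Plus a b) then show ?case by (simp add: loclip_add)
next
  case (Times a b) then show ?case by (simp add: loclip_mult)
next
  case (Fn f ts)
  have "\<forall>h\<in>set (map (\<lambda>t s. eval I s t) ts). loclip V h" using Fn by auto
  moreover have "smooth_len (length (map (\<lambda>t s. eval I s t) ts)) (I f)" using Fn sm by simp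
  ultimately have "loclip V (\<lambda>s. I f (map (\<lambda>h. h s) (map (\<lambda>t s. eval I s t) ts)))"
    by (rule loclip_compose[rotated])
  then show ?case by (simp add: comp_def)
qed



lemma ren_nth: "length xs = length ys \<Longrightarrow> distinct xs \<Longrightarrow> i < length xs \<Longrightarrow> ren xs ys (xs!i) = ys!i"
  unfolding ren_def by (simp add: map_of_zip_nth)

lemma ren_notin: "length xs = length ys \<Longrightarrow> v \<notin> set xs \<Longrightarrow> ren xs ys v = v"
proof -
  assume a: "length xs = length ys" "v \<notin> set xs"
  have "fst ` set (zip xs ys) = set xs" using a by (metis map_fst_zip set_map)
  then have "map_of (zip xs ys) v = None" using a by (simp add: map_of_eq_None_iff)
  then show ?thesis by (simp add: ren_def)
qed

lemma sol_zip:
  assumes "length fs = length xs"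
  shows "sol I (zip xs fs) \<omega> T \<phi> \<longleftrightarrow> T \<ge> 0 \<and> (\<forall>v. v \<notin> Diff ` set xs \<longrightarrow> \<phi> 0 v = \<omega> v) \<and>
     (\<forall>\<zeta>\<in>{0..T}. (\<forall>i<length xs. \<phi> \<zeta> (Diff (xs!i)) = eval I (\<phi> \<zeta>) (fs!i)) \<and>
        (\<forall>v. v \<notin> Base ` set xs \<longrightarrow> v \<notin> Diff ` set xs \<longrightarrow> \<phi> \<zeta> v = \<phi> 0 v) \<and>
        (T > 0 \<longrightarrow> (\<forall>i<length xs. ((\<lambda>t. \<phi> t (Base (xs!i))) has_real_derivative \<phi> \<zeta> (Diff (xs!i))) (at \<zeta> within {0..T}))))"
proof -
  have m: "map fst (zip xs fs) = xs" using assms by simp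
  have z: "(\<forall>(x, f)\<in>set (zip xs fs). P x f) \<longleftrightarrow> (\<forall>i<length xs. P (xs!i) (fs!i))" for P
    using assms by (auto simp: set_zip)
  show ?thesis unfolding sol_def m z by (auto simp: all_set_conv_all_nth)
qed

lemma deriv_rev:
  fixes g :: "real \<Rightarrow> real"
  assumes "(g has_real_derivative d) (at (T - \<zeta>) within {0..T})" "\<zeta> \<in> {0..T}"
  shows "((\<lambda>t. g (T - t)) has_real_derivative - d) (at \<zeta> within {0..T})"
proof -
  have im: "(\<lambda>t. T - t) ` {0..T} = {0..T}"
    by (auto simp: image_iff intro!: bexI[where x="T - x" for x])
  have "((\<lambda>t. T - t) has_real_derivative -1) (at \<zeta> within {0..T})"
    by (auto intro!: derivative_eq_intros)
  from DERIV_image_chain[of g d "\<lambda>t. T - t" \<zeta> "{0..T}", unfolded im, OF assms(1) this]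
  show ?thesis by (simp add: comp_def)
qed

lemma dadj:
  assumes len: "length fs = length xs" "length ys = length xs"
    and dx: "distinct xs" and dy: "distinct ys" and disj: "set ys \<inter> set xs = {}"
    and fr: "\<forall>y\<in>set ys. y \<notin> (\<Union>f\<in>set fs. vars_trm f) \<and> y \<notin> vars_fml Q"
    and df: "\<forall>f\<in>set fs. dfree f" and sa: "semianalytic Q"
  shows "sem I (Dia (zip xs fs) Q (VecEq xs ys)) \<omega> \<longleftrightarrow>
         sem I (Dia (zip ys (map (\<lambda>f. Neg (rename_trm (ren xs ys) f)) fs)) (rename_fml (ren xs ys) Q) (VecEq ys xs)) \<omega>"
    (is "?L \<longleftrightarrow> ?R")
proof -
  define \<sigma> where "\<sigma> = ren xs ys"
  define n where "n = length xs"
  define gs where "gs = map (\<lambda>f. Neg (rename_trm \<sigma> f)) fs"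
  have lgs: "length gs = length ys" using len by (simp add: gs_def)
  have gsi: "gs!i = Neg (rename_trm \<sigma> (fs!i))" if "i < n" for i using that len by (simp add: gs_def n_def)
  have \<sigma>x: "\<sigma> (xs!i) = ys!i" if "i < n" for i using ren_nth[of xs ys i] len dx that by (simp add: \<sigma>_def n_def)
  have \<sigma>o: "\<sigma> v = v" if "v \<notin> set xs" for v using ren_notin[of xs ys v] len that by (simp add: \<sigma>_def)
  have \<rho>y: "ren ys xs (ys!i) = xs!i" if "i < n" for i using ren_nth[of ys xs i] len dy that by (simp add: n_def)
  have yx: "ys!i \<notin> set xs" if "i < n" for i
  proof -
    have "ys!i \<in> set ys" using that len by (simp add: n_def)
    then show ?thesis using disj by blast
  qed
  have xy: "xs!i \<notin> set ys" if "i < n" for i using disj that len nth_mem[of i xs] by (auto simp: n_def)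
  have frf: "v \<notin> set ys" if "v \<in> vars_trm (fs!i)" "i < n" for v i using fr that len by (auto simp: n_def)
  have frq: "v \<notin> set ys" if "v \<in> vars_fml Q" for v using fr that by auto
  have dfi: "dfree (fs!i)" if "i < n" for i using df that len by (auto simp: n_def)
  have setx: "v \<in> set xs \<longleftrightarrow> (\<exists>i<n. v = xs!i)" for v by (auto simp: n_def in_set_conv_nth)
  have sety: "v \<in> set ys \<longleftrightarrow> (\<exists>i<n. v = ys!i)" for v using len by (auto simp: n_def in_set_conv_nth)
  have VE1: "sem I (VecEq xs ys) s \<longleftrightarrow> (\<forall>i<n. s (Base (xs!i)) = s (Base (ys!i)))" for s
    using sem_VecEq[of xs ys] len by (simp add: n_def)
  have VE2: "sem I (VecEq ys xs) s \<longleftrightarrow> (\<forall>i<n. s (Base (ys!i)) = s (Base (xs!i)))" for s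
    using sem_VecEq[of ys xs] len by (simp add: n_def)
  have S1: "sol I (zip xs fs) \<omega> T \<phi> \<longleftrightarrow> T \<ge> 0 \<and> (\<forall>v. v \<notin> Diff ` set xs \<longrightarrow> \<phi> 0 v = \<omega> v) \<and>
     (\<forall>\<zeta>\<in>{0..T}. (\<forall>i<n. \<phi> \<zeta> (Diff (xs!i)) = eval I (\<phi> \<zeta>) (fs!i)) \<and>
        (\<forall>v. v \<notin> Base ` set xs \<longrightarrow> v \<notin> Diff ` set xs \<longrightarrow> \<phi> \<zeta> v = \<phi> 0 v) \<and>
        (T > 0 \<longrightarrow> (\<forall>i<n. ((\<lambda>t. \<phi> t (Base (xs!i))) has_real_derivative \<phi> \<zeta> (Diff (xs!i))) (at \<zeta> within {0..T}))))"
    for T \<phi> using sol_zip[of fs xs I \<omega> T \<phi>] len by (simp add: n_def)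
  have S2: "sol I (zip ys gs) \<omega> T \<phi> \<longleftrightarrow> T \<ge> 0 \<and> (\<forall>v. v \<notin> Diff ` set ys \<longrightarrow> \<phi> 0 v = \<omega> v) \<and>
     (\<forall>\<zeta>\<in>{0..T}. (\<forall>i<n. \<phi> \<zeta> (Diff (ys!i)) = - eval I (\<phi> \<zeta> \<circ> rename_var \<sigma>) (fs!i)) \<and>
        (\<forall>v. v \<notin> Base ` set ys \<longrightarrow> v \<notin> Diff ` set ys \<longrightarrow> \<phi> \<zeta> v = \<phi> 0 v) \<and>
        (T > 0 \<longrightarrow> (\<forall>i<n. ((\<lambda>t. \<phi> t (Base (ys!i))) has_real_derivative \<phi> \<zeta> (Diff (ys!i))) (at \<zeta> within {0..T}))))"
    for T \<phi> using sol_zip[of gs ys I \<omega> T \<phi>] lgs len by (simp add: n_def gsi Neg_def eval_rename)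
  show ?thesis
  proof
    assume ?L
    then obtain T \<phi> where sol: "sol I (zip xs fs) \<omega> T \<phi>" and Qp: "\<forall>\<zeta>\<in>{0..T}. sem I Q (\<phi> \<zeta>)"
      and fin: "sem I (VecEq xs ys) (\<phi> T)"
      by (auto simp: ode_rel_sol)
    note s = sol[unfolded S1]
    have T0: "T \<ge> 0" using s by auto
    define \<psi> where "\<psi> t = (\<lambda>v. case v of Base b \<Rightarrow> if b \<in> set ys then \<phi> (T - t) (Base (ren ys xs b)) else \<omega> v
        | Diff b \<Rightarrow> if b \<in> set ys then - \<phi> (T - t) (Diff (ren ys xs b)) else \<omega> v)" for t
    have \<psi>B: "\<psi> t (Base (ys!i)) = \<phi> (T - t) (Base (xs!i))" if "i < n" for t i
      using that \<rho>y by (auto simp: \<psi>_def sety)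
    have \<psi>D: "\<psi> t (Diff (ys!i)) = - \<phi> (T - t) (Diff (xs!i))" if "i < n" for t i
      using that \<rho>y by (auto simp: \<psi>_def sety)
    have \<psi>o: "\<psi> t v = \<omega> v" if "v \<notin> Base ` set ys" "v \<notin> Diff ` set ys" for t v
      using that by (cases v) (auto simp: \<psi>_def)
    have \<psi>oB: "\<psi> t (Base v) = \<omega> (Base v)" if "v \<notin> set ys" for t v
      using that by (auto simp: \<psi>_def)
    have \<phi>const: "\<phi> \<zeta> (Base v) = \<omega> (Base v)" if "v \<notin> set xs" "\<zeta> \<in> {0..T}" for v \<zeta>
      using s that by force
    have KEY: "(\<psi> \<zeta> \<circ> rename_var \<sigma>) (Base v) = \<phi> (T - \<zeta>) (Base v)" if "v \<notin> set ys" "\<zeta> \<in> {0..T}" for v \<zeta>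
    proof (cases "v \<in> set xs")
      case True
      then obtain i where "i < n" "v = xs!i" using setx by auto
      then show ?thesis using \<sigma>x \<psi>B by simp
    next
      case False
      then show ?thesis using \<sigma>o \<psi>oB that \<phi>const[of v "T - \<zeta>"] by auto
    qed
    have "sol I (zip ys gs) \<omega> T \<psi>"
      unfolding S2
    proof (intro conjI allI impI ballI T0)
      fix v :: "'a var" assume v: "v \<notin> Diff ` set ys"
      show "\<psi> 0 v = \<omega> v"
      proof (cases "v \<in> Base ` set ys")
        case True
        then obtain i where i: "i < n" "v = Base (ys!i)" using sety by auto
        have "\<psi> 0 v = \<phi> T (Base (xs!i))" using \<psi>B i by simp
        also have "\<dots> = \<phi> T (Base (ys!i))" using fin i VE1 by auto
        also have "\<dots> = \<omega> (Base (ys!i))" using \<phi>const[of "ys!i" T] yx[OF i(1)] T0 by auto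
        finally show ?thesis using i by simp
      qed (use \<psi>o v in auto)
    next
      fix \<zeta> i assume z: "\<zeta> \<in> {0..T}" and i: "i < n"
      have "eval I (\<psi> \<zeta> \<circ> rename_var \<sigma>) (fs!i) = eval I (\<phi> (T - \<zeta>)) (fs!i)"
        by (rule eval_coinc[OF dfi[OF i]]) (use KEY frf i z in auto)
      moreover have "\<phi> (T - \<zeta>) (Diff (xs!i)) = eval I (\<phi> (T - \<zeta>)) (fs!i)" using s z i by auto
      ultimately show "\<psi> \<zeta> (Diff (ys!i)) = - eval I (\<psi> \<zeta> \<circ> rename_var \<sigma>) (fs!i)" using \<psi>D i by simp
    next
      fix \<zeta> v assume "v \<notin> Base ` set ys" "v \<notin> Diff ` set ys"
      then show "\<psi> \<zeta> v = \<psi> 0 v" using \<psi>o by simp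
    next
      fix \<zeta> i assume z: "\<zeta> \<in> {0..T}" and Tp: "T > 0" and i: "i < n"
      have z': "T - \<zeta> \<in> {0..T}" using z by auto
      have "((\<lambda>t. \<phi> t (Base (xs!i))) has_real_derivative \<phi> (T - \<zeta>) (Diff (xs!i))) (at (T - \<zeta>) within {0..T})"
        using s z' Tp i by blast
      from deriv_rev[OF this z]
      show "((\<lambda>t. \<psi> t (Base (ys!i))) has_real_derivative \<psi> \<zeta> (Diff (ys!i))) (at \<zeta> within {0..T})"
        using \<psi>B[OF i] \<psi>D[OF i] by simp
    qed
    moreover have "sem I (VecEq ys xs) (\<psi> T)"
      unfolding VE2
    proof (intro allI impI)
      fix i assume i: "i < n"
      have "\<psi> T (Base (ys!i)) = \<phi> 0 (Base (xs!i))" using \<psi>B[OF i] by simp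
      also have "\<dots> = \<omega> (Base (xs!i))" using s by auto
      also have "\<dots> = \<psi> T (Base (xs!i))" using \<psi>oB[OF xy[OF i]] by simp
      finally show "\<psi> T (Base (ys!i)) = \<psi> T (Base (xs!i))" .
    qed
    moreover have "\<forall>\<zeta>\<in>{0..T}. sem I (rename_fml \<sigma> Q) (\<psi> \<zeta>)"
    proof
      fix \<zeta> assume z: "\<zeta> \<in> {0..T}"
      have "sem I (rename_fml \<sigma> Q) (\<psi> \<zeta>) = sem I Q (\<psi> \<zeta> \<circ> rename_var \<sigma>)" using sem_rename[OF sa] by simp
      also have "\<dots> = sem I Q (\<phi> (T - \<zeta>))"
        by (rule sem_coinc[OF sa]) (use KEY frq z in auto)
      finally show "sem I (rename_fml \<sigma> Q) (\<psi> \<zeta>)" using Qp z by auto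
    qed
    ultimately show ?R unfolding gs_def[symmetric] \<sigma>_def[symmetric] by (auto simp: ode_rel_sol)
  next
    assume ?R
    then obtain T \<psi> where sol: "sol I (zip ys gs) \<omega> T \<psi>" and Qp: "\<forall>\<zeta>\<in>{0..T}. sem I (rename_fml \<sigma> Q) (\<psi> \<zeta>)"
      and fin: "sem I (VecEq ys xs) (\<psi> T)"
      unfolding gs_def \<sigma>_def by (auto simp: ode_rel_sol)
    note s = sol[unfolded S2]
    have T0: "T \<ge> 0" using s by auto
    define \<phi> where "\<phi> t = (\<lambda>v. case v of Base a \<Rightarrow> if a \<in> set xs then \<psi> (T - t) (Base (\<sigma> a)) else \<omega> v
        | Diff a \<Rightarrow> if a \<in> set xs then - \<psi> (T - t) (Diff (\<sigma> a)) else \<omega> v)" for t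
    have \<phi>B: "\<phi> t (Base (xs!i)) = \<psi> (T - t) (Base (ys!i))" if "i < n" for t i
      using that \<sigma>x by (auto simp: \<phi>_def setx)
    have \<phi>D: "\<phi> t (Diff (xs!i)) = - \<psi> (T - t) (Diff (ys!i))" if "i < n" for t i
      using that \<sigma>x by (auto simp: \<phi>_def setx)
    have \<phi>o: "\<phi> t v = \<omega> v" if "v \<notin> Base ` set xs" "v \<notin> Diff ` set xs" for t v
      using that by (cases v) (auto simp: \<phi>_def)
    have \<phi>oB: "\<phi> t (Base v) = \<omega> (Base v)" if "v \<notin> set xs" for t v
      using that by (auto simp: \<phi>_def)
    have \<psi>const: "\<psi> \<zeta> (Base v) = \<omega> (Base v)" if "v \<notin> set ys" "\<zeta> \<in> {0..T}" for v \<zeta>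
      using s that by force
    have KEY: "(\<psi> (T - \<zeta>) \<circ> rename_var \<sigma>) (Base v) = \<phi> \<zeta> (Base v)" if "v \<notin> set ys" "\<zeta> \<in> {0..T}" for v \<zeta>
    proof (cases "v \<in> set xs")
      case True
      then obtain i where "i < n" "v = xs!i" using setx by auto
      then show ?thesis using \<sigma>x \<phi>B by simp
    next
      case False
      then show ?thesis using \<sigma>o \<phi>oB that \<psi>const[of v "T - \<zeta>"] by auto
    qed
    have "sol I (zip xs fs) \<omega> T \<phi>"
      unfolding S1
    proof (intro conjI allI impI ballI T0)
      fix v :: "'a var" assume v: "v \<notin> Diff ` set xs"
      show "\<phi> 0 v = \<omega> v"
      proof (cases "v \<in> Base ` set xs")
        case True
        then obtain i where i: "i < n" "v = Base (xs!i)" using setx by auto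
        have "\<phi> 0 v = \<psi> T (Base (ys!i))" using \<phi>B i by simp
        also have "\<dots> = \<psi> T (Base (xs!i))" using fin i VE2 by auto
        also have "\<dots> = \<omega> (Base (xs!i))" using \<psi>const[of "xs!i" T] xy[OF i(1)] T0 by auto
        finally show ?thesis using i by simp
      qed (use \<phi>o v in auto)
    next
      fix \<zeta> i assume z: "\<zeta> \<in> {0..T}" and i: "i < n"
      have z': "T - \<zeta> \<in> {0..T}" using z by auto
      have "eval I (\<psi> (T - \<zeta>) \<circ> rename_var \<sigma>) (fs!i) = eval I (\<phi> \<zeta>) (fs!i)"
        by (rule eval_coinc[OF dfi[OF i]]) (use KEY frf i z in auto)
      moreover have "\<psi> (T - \<zeta>) (Diff (ys!i)) = - eval I (\<psi> (T - \<zeta>) \<circ> rename_var \<sigma>) (fs!i)" using s z' i by blast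
      ultimately show "\<phi> \<zeta> (Diff (xs!i)) = eval I (\<phi> \<zeta>) (fs!i)" using \<phi>D i by simp
    next
      fix \<zeta> v assume "v \<notin> Base ` set xs" "v \<notin> Diff ` set xs"
      then show "\<phi> \<zeta> v = \<phi> 0 v" using \<phi>o by simp
    next
      fix \<zeta> i assume z: "\<zeta> \<in> {0..T}" and Tp: "T > 0" and i: "i < n"
      have z': "T - \<zeta> \<in> {0..T}" using z by auto
      have "((\<lambda>t. \<psi> t (Base (ys!i))) has_real_derivative \<psi> (T - \<zeta>) (Diff (ys!i))) (at (T - \<zeta>) within {0..T})"
        using s z' Tp i by blast
      from deriv_rev[OF this z]
      show "((\<lambda>t. \<phi> t (Base (xs!i))) has_real_derivative \<phi> \<zeta> (Diff (xs!i))) (at \<zeta> within {0..T})"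
        using \<phi>B[OF i] \<phi>D[OF i] by simp
    qed
    moreover have "sem I (VecEq xs ys) (\<phi> T)"
      unfolding VE1
    proof (intro allI impI)
      fix i assume i: "i < n"
      have "\<phi> T (Base (xs!i)) = \<psi> 0 (Base (ys!i))" using \<phi>B[OF i] by simp
      also have "\<dots> = \<omega> (Base (ys!i))" using s by auto
      also have "\<dots> = \<phi> T (Base (ys!i))" using \<phi>oB[OF yx[OF i]] by simp
      finally show "\<phi> T (Base (xs!i)) = \<phi> T (Base (ys!i))" .
    qed
    moreover have "\<forall>\<zeta>\<in>{0..T}. sem I Q (\<phi> \<zeta>)"
    proof
      fix \<zeta> assume z: "\<zeta> \<in> {0..T}"
      have z': "T - \<zeta> \<in> {0..T}" using z by auto
      have "sem I Q (\<phi> \<zeta>) = sem I Q (\<psi> (T - \<zeta>) \<circ> rename_var \<sigma>)"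
        by (rule sem_coinc[OF sa]) (use KEY frq z in auto)
      also have "\<dots> = sem I (rename_fml \<sigma> Q) (\<psi> (T - \<zeta>))" using sem_rename[OF sa] by simp
      finally show "sem I Q (\<phi> \<zeta>)" using Qp z' by auto
    qed
    ultimately show ?L by (auto simp: ode_rel_sol)
  qed
qed



lemma sum_set_nth: "distinct xs \<Longrightarrow> sum g (set xs) = (\<Sum>i<length xs. g (xs!i))"
proof -
  assume d: "distinct xs"
  have s: "set xs = (\<lambda>i. xs!i) ` {..<length xs}" by (auto simp: in_set_conv_nth image_iff)
  have "inj_on (\<lambda>i. xs!i) {..<length xs}" using d by (simp add: inj_on_nth)
  then show ?thesis unfolding s by (simp add: sum.reindex)
qed

lemma dV_idx:
  assumes "finite V" "set xs \<subseteq> V" "distinct xs" "\<And>v. v \<in> V \<Longrightarrow> v \<notin> set xs \<Longrightarrow> s1 (Base v) = s2 (Base v)"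
  shows "dV V s1 s2 = (\<Sum>i<length xs. \<bar>s1 (Base (xs!i)) - s2 (Base (xs!i))\<bar>)"
proof -
  have "dV V s1 s2 = (\<Sum>v\<in>set xs. \<bar>s1 (Base v) - s2 (Base v)\<bar>)"
    unfolding dV_def by (rule sum.mono_neutral_right) (use assms in auto)
  also have "\<dots> = (\<Sum>i<length xs. \<bar>s1 (Base (xs!i)) - s2 (Base (xs!i))\<bar>)"
    using assms(3) by (rule sum_set_nth)
  finally show ?thesis .
qed

lemma sol_facts:
  assumes len: "length fs = length xs" and s: "sol I (zip xs fs) \<omega> T \<phi>"
  shows "T \<ge> 0" "\<And>a. \<phi> 0 (Base a) = \<omega> (Base a)"
    "\<And>\<zeta> a. \<zeta> \<in> {0..T} \<Longrightarrow> a \<notin> set xs \<Longrightarrow> \<phi> \<zeta> (Base a) = \<omega> (Base a)"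
    "\<And>\<zeta> a. \<zeta> \<in> {0..T} \<Longrightarrow> a \<notin> set xs \<Longrightarrow> \<phi> \<zeta> (Diff a) = \<omega> (Diff a)"
    "\<And>\<zeta> i. \<zeta> \<in> {0..T} \<Longrightarrow> i < length xs \<Longrightarrow> \<phi> \<zeta> (Diff (xs!i)) = eval I (\<phi> \<zeta>) (fs!i)"
    "\<And>\<zeta> i. T > 0 \<Longrightarrow> \<zeta> \<in> {0..T} \<Longrightarrow> i < length xs \<Longrightarrow>
       ((\<lambda>t. \<phi> t (Base (xs!i))) has_real_derivative \<phi> \<zeta> (Diff (xs!i))) (at \<zeta> within {0..T})"
  using s[unfolded sol_zip[OF len]] by force+

lemma deriv_cont_on:
  assumes "\<And>\<zeta>. \<zeta> \<in> S \<Longrightarrow> (f has_real_derivative f' \<zeta>) (at \<zeta> within S)"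
  shows "continuous_on S f"
  using assms by (auto simp: continuous_on_eq_continuous_within intro: DERIV_continuous)

lemma mvt_bound2:
  fixes w :: "real \<Rightarrow> real"
  assumes ab: "a \<le> b" and c: "continuous_on {a..b} w"
    and d: "\<And>z. a < z \<Longrightarrow> z < b \<Longrightarrow> (w has_real_derivative w' z) (at z)"
    and bd: "\<And>z. a < z \<Longrightarrow> z < b \<Longrightarrow> \<bar>w' z\<bar> \<le> K"
  shows "\<bar>w b - w a\<bar> \<le> K * (b - a)"
proof (cases "a = b")
  case False
  then have "a < b" using ab by simp
  from MVT[OF this c] d obtain l z where z: "a < z" "z < b" "(w has_real_derivative l) (at z)" "w b - w a = (b - a) * l"
    by (metis real_differentiable_def)
  have "l = w' z" using DERIV_unique[OF z(3) d[OF z(1,2)]] .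
  then have "\<bar>l\<bar> \<le> K" using bd z by simp
  then show ?thesis using z ab by (simp add: abs_mult mult.commute mult_left_mono)
qed simp



lemma finite_vars_trm: "finite (vars_trm t)"
proof (induction t)
  case (Var x) then show ?case by (cases x) auto
qed auto

lemma uniq_sol:
  assumes sm: "\<forall>g. smooth_len (ar g) (I g)"
    and len: "length fs = length xs" and dx: "distinct xs"
    and df: "\<forall>f\<in>set fs. dfree f \<and> wf_trm ar f"
    and s1: "sol I (zip xs fs) \<omega> T1 \<phi>1" and s2: "sol I (zip xs fs) \<omega> T2 \<phi>2"
  shows "\<forall>t\<in>{0..min T1 T2}. \<phi>1 t = \<phi>2 t"
proof -
  define n where "n = length xs"
  define V where "V = set xs \<union> (\<Union>f\<in>set fs. vars_trm f)"
  define Tm where "Tm = min T1 T2"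
  have finV: "finite V" unfolding V_def by (simp add: finite_vars_trm)
  have xV: "set xs \<subseteq> V" unfolding V_def by auto
  have fsi: "fs!i \<in> set fs" if "i < n" for i using that len by (simp add: n_def)
  have lipG: "loclip V (\<lambda>s. eval I s (fs!i))" if "i < n" for i
    using eval_loclip[OF sm finV] df fsi[OF that] unfolding V_def by blast
  note f1 = sol_facts[OF len s1, folded n_def]
  note f2 = sol_facts[OF len s2, folded n_def]
  have Tm0: "Tm \<ge> 0" using f1(1) f2(1) by (simp add: Tm_def)
  have inT1: "t \<in> {0..T1}" and inT2: "t \<in> {0..T2}" if "t \<in> {0..Tm}" for t using that by (auto simp: Tm_def)
  define D where "D t = (\<Sum>i<n. \<bar>\<phi>1 t (Base (xs!i)) - \<phi>2 t (Base (xs!i))\<bar>)" for t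
  have D0: "D t \<ge> 0" for t unfolding D_def by (rule sum_nonneg) auto
  have dVD: "dV V (\<phi>1 t) (\<phi>2 t) = D t" if "t \<in> {0..Tm}" for t
    unfolding D_def n_def by (rule dV_idx[OF finV xV dx]) (use f1(3) f2(3) inT1 inT2 that in auto)
  have eqD: "\<phi>1 t = \<phi>2 t" if t: "t \<in> {0..Tm}" and Dt: "D t = 0" for t
  proof -
    have base: "\<phi>1 t (Base a) = \<phi>2 t (Base a)" for a
    proof (cases "a \<in> set xs")
      case True
      then obtain i where i: "i < n" "a = xs!i" by (auto simp: n_def in_set_conv_nth)
      have "\<forall>i\<in>{..<n}. \<bar>\<phi>1 t (Base (xs!i)) - \<phi>2 t (Base (xs!i))\<bar> = 0"
        using Dt unfolding D_def by (subst sum_nonneg_eq_0_iff[symmetric]) auto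
      then show ?thesis using i by auto
    next
      case False then show ?thesis using f1(3) f2(3) inT1 inT2 t by auto
    qed
    show ?thesis
    proof
      fix v show "\<phi>1 t v = \<phi>2 t v"
      proof (cases v)
        case (Base a) then show ?thesis using base by simp
      next
        case (Diff a)
        show ?thesis
        proof (cases "a \<in> set xs")
          case True
          then obtain i where i: "i < n" "a = xs!i" by (auto simp: n_def in_set_conv_nth)
          have "eval I (\<phi>1 t) (fs!i) = eval I (\<phi>2 t) (fs!i)"
            by (rule eval_coinc) (use df fsi[OF i(1)] base in auto)
          then show ?thesis using f1(5)[OF inT1[OF t] i(1)] f2(5)[OF inT2[OF t] i(1)] Diff i by simp
        next
          case False then show ?thesis using f1(4) f2(4) inT1 inT2 t Diff by auto
        qed
      qed
    qed
  qed
  have main: "\<forall>t\<in>{0..Tm}. D t = 0"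
  proof (rule ccontr)
    assume "\<not> (\<forall>t\<in>{0..Tm}. D t = 0)"
    then obtain t1 where t1: "t1 \<in> {0..Tm}" "D t1 \<noteq> 0" by auto
    have Dz: "D 0 = 0" unfolding D_def using f1(2) f2(2) by simp
    have Tmp: "Tm > 0" using t1 Dz Tm0 by (cases "Tm = 0") auto
    then have T1p: "T1 > 0" and T2p: "T2 > 0" by (auto simp: Tm_def)
    have cont1: "continuous_on {0..Tm} (\<lambda>t. \<phi>1 t (Base (xs!i)))" if "i < n" for i
    proof -
      have "continuous_on {0..T1} (\<lambda>t. \<phi>1 t (Base (xs!i)))"
        by (rule deriv_cont_on) (use f1(6)[OF T1p _ that] in blast)
      then show ?thesis by (rule continuous_on_subset) (auto simp: Tm_def)
    qed
    have cont2: "continuous_on {0..Tm} (\<lambda>t. \<phi>2 t (Base (xs!i)))" if "i < n" for i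
    proof -
      have "continuous_on {0..T2} (\<lambda>t. \<phi>2 t (Base (xs!i)))"
        by (rule deriv_cont_on) (use f2(6)[OF T2p _ that] in blast)
      then show ?thesis by (rule continuous_on_subset) (auto simp: Tm_def)
    qed
    have contD: "continuous_on {0..Tm} D"
      unfolding D_def by (intro continuous_on_sum continuous_on_rabs continuous_on_diff cont1 cont2) auto
    define A where "A = {t\<in>{0..Tm}. D t \<noteq> 0}"
    define t0 where "t0 = Inf A"
    have t1A: "t1 \<in> A" using t1 by (simp add: A_def)
    have bdd: "bdd_below A" unfolding A_def by (rule bdd_belowI[of _ 0]) auto
    have t0ge: "t0 \<ge> 0" unfolding t0_def using t1A by (intro cInf_greatest) (auto simp: A_def)
    have t0le: "t0 \<le> t1" unfolding t0_def using t1A bdd by (rule cInf_lower)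
    have t0in: "t0 \<in> {0..Tm}" using t0ge t0le t1 by auto
    have below: "D s = 0" if "s \<in> {0..Tm}" "s < t0" for s
    proof (rule ccontr)
      assume "D s \<noteq> 0"
      then have "s \<in> A" using that by (simp add: A_def)
      then have "t0 \<le> s" unfolding t0_def using bdd by (rule cInf_lower)
      then show False using that by simp
    qed
    have Dt0: "D t0 = 0"
    proof (rule ccontr)
      assume ne: "D t0 \<noteq> 0"
      then have t0p: "t0 > 0" using Dz t0ge by (cases "t0 = 0") auto
      from contD t0in ne obtain d where d: "d > 0" "\<forall>x'\<in>{0..Tm}. dist x' t0 < d \<longrightarrow> dist (D x') (D t0) < \<bar>D t0\<bar>"
        unfolding continuous_on_iff by (metis zero_less_abs_iff)
      define x' where "x' = max 0 (t0 - d/2)"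
      have x': "x' \<in> {0..Tm}" "x' < t0" "dist x' t0 < d" using t0in t0p d(1) by (auto simp: x'_def dist_real_def)
      have "D x' = 0" using below x' by auto
      moreover have "dist (D x') (D t0) < \<bar>D t0\<bar>" using d(2) x' by blast
      ultimately show False by (simp add: dist_real_def)
    qed
    have t0lt: "t0 < Tm" using t0le t1 Dt0 by (cases "t0 = t1") auto
    have eq0: "\<phi>1 t0 = \<phi>2 t0" using eqD t0in Dt0 by simp
    define s0 where "s0 = \<phi>1 t0"
    have "\<forall>i<n. \<exists>\<delta>>0. \<exists>L\<ge>0. \<forall>s1 s2. dV V s1 s0 < \<delta> \<longrightarrow> dV V s2 s0 < \<delta> \<longrightarrow>
        \<bar>eval I s1 (fs!i) - eval I s2 (fs!i)\<bar> \<le> L * dV V s1 s2"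
      using lipG unfolding loclip_def by blast
    then obtain \<Delta> \<Lambda> where DL: "\<And>i. i < n \<Longrightarrow> \<Delta> i > 0 \<and> \<Lambda> i \<ge> 0 \<and> (\<forall>s1 s2. dV V s1 s0 < \<Delta> i \<longrightarrow> dV V s2 s0 < \<Delta> i \<longrightarrow>
        \<bar>eval I s1 (fs!i) - eval I s2 (fs!i)\<bar> \<le> \<Lambda> i * dV V s1 s2)"
      by metis
    define \<delta> where "\<delta> = Min (insert 1 (\<Delta> ` {..<n}))"
    have \<delta>pos: "\<delta> > 0" unfolding \<delta>_def using DL by (auto simp: Min_gr_iff)
    have \<delta>le: "\<delta> \<le> \<Delta> i" if "i < n" for i unfolding \<delta>_def using that by (auto intro: Min_le)
    define L where "L = (\<Sum>i<n. \<Lambda> i)"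
    have L0: "L \<ge> 0" unfolding L_def using DL by (auto intro: sum_nonneg)
    have Lge: "\<Lambda> i \<le> L" if "i < n" for i unfolding L_def using that DL by (intro member_le_sum) auto
    define E1 where "E1 t = (\<Sum>i<n. \<bar>\<phi>1 t (Base (xs!i)) - \<phi>1 t0 (Base (xs!i))\<bar>)" for t
    define E2 where "E2 t = (\<Sum>i<n. \<bar>\<phi>2 t (Base (xs!i)) - \<phi>2 t0 (Base (xs!i))\<bar>)" for t
    have dVE1: "dV V (\<phi>1 t) s0 = E1 t" if "t \<in> {0..Tm}" for t
      unfolding E1_def n_def s0_def by (rule dV_idx[OF finV xV dx]) (use f1(3) inT1 that t0in in auto)
    have dVE2: "dV V (\<phi>2 t) s0 = E2 t" if "t \<in> {0..Tm}" for t
      unfolding E2_def n_def s0_def eq0 by (rule dV_idx[OF finV xV dx]) (use f2(3) inT2 that t0in in auto)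
    have contE1: "continuous_on {0..Tm} E1"
      unfolding E1_def by (intro continuous_on_sum continuous_on_rabs continuous_on_diff cont1 continuous_on_const) auto
    have contE2: "continuous_on {0..Tm} E2"
      unfolding E2_def by (intro continuous_on_sum continuous_on_rabs continuous_on_diff cont2 continuous_on_const) auto
    have E10: "E1 t0 = 0" and E20: "E2 t0 = 0" by (simp_all add: E1_def E2_def)
    from contE1 t0in \<delta>pos obtain \<eta>1 where \<eta>1: "\<eta>1 > 0" "\<forall>t\<in>{0..Tm}. dist t t0 < \<eta>1 \<longrightarrow> dist (E1 t) (E1 t0) < \<delta>"
      unfolding continuous_on_iff by metis
    from contE2 t0in \<delta>pos obtain \<eta>2 where \<eta>2: "\<eta>2 > 0" "\<forall>t\<in>{0..Tm}. dist t t0 < \<eta>2 \<longrightarrow> dist (E2 t) (E2 t0) < \<delta>"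
      unfolding continuous_on_iff by metis
    define c where "c = 1 / (2 * (real n + 1) * (L + 1))"
    have cpos: "c > 0" using L0 by (simp add: c_def)
    define b where "b = min (t0 + min \<eta>1 \<eta>2 / 2) (min Tm (t0 + c))"
    have bgt: "b > t0" using \<eta>1 \<eta>2 cpos t0lt by (simp add: b_def)
    have ble: "b \<le> Tm" by (simp add: b_def)
    have bc: "b - t0 \<le> c" by (simp add: b_def)
    have b\<eta>: "b - t0 < \<eta>1" "b - t0 < \<eta>2" using \<eta>1 \<eta>2 by (auto simp: b_def)
    have nLb: "real n * L * (b - t0) \<le> 1/2"
    proof -
      have "real n * L \<le> (real n + 1) * (L + 1)" using L0 by (simp add: algebra_simps)
      then have "real n * L * (b - t0) \<le> (real n + 1) * (L + 1) * (b - t0)" using bgt by (intro mult_right_mono) auto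
      also have "\<dots> \<le> (real n + 1) * (L + 1) * c" using bc L0 by (intro mult_left_mono) auto
      also have "\<dots> = 1/2" using L0 by (simp add: c_def)
      finally show ?thesis .
    qed
    have sub: "{t0..b} \<subseteq> {0..Tm}" using t0ge ble by auto
    obtain sm where sm: "sm \<in> {t0..b}" "\<forall>y\<in>{t0..b}. D y \<le> D sm"
      using continuous_attains_sup[of "{t0..b}" D] continuous_on_subset[OF contD sub] bgt by auto
    have near1: "dV V (\<phi>1 z) s0 < \<Delta> i" and near2: "dV V (\<phi>2 z) s0 < \<Delta> i" if z: "z \<in> {t0..b}" and i: "i < n" for z i
    proof -
      have zin: "z \<in> {0..Tm}" using z sub by auto
      have dz: "dist z t0 < \<eta>1" "dist z t0 < \<eta>2" using z b\<eta> by (auto simp: dist_real_def)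
      have "E1 z < \<delta>" using \<eta>1(2) zin dz E10 by (auto simp: dist_real_def)
      then show "dV V (\<phi>1 z) s0 < \<Delta> i" using dVE1[OF zin] \<delta>le[OF i] by simp
      have "E2 z < \<delta>" using \<eta>2(2) zin dz E20 by (auto simp: dist_real_def)
      then show "dV V (\<phi>2 z) s0 < \<Delta> i" using dVE2[OF zin] \<delta>le[OF i] by simp
    qed
    have lipz: "\<bar>eval I (\<phi>1 z) (fs!i) - eval I (\<phi>2 z) (fs!i)\<bar> \<le> L * D sm" if z: "z \<in> {t0..b}" and i: "i < n" for z i
    proof -
      have zin: "z \<in> {0..Tm}" using z sub by auto
      have "\<bar>eval I (\<phi>1 z) (fs!i) - eval I (\<phi>2 z) (fs!i)\<bar> \<le> \<Lambda> i * dV V (\<phi>1 z) (\<phi>2 z)"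
        using DL[OF i] near1[OF z i] near2[OF z i] by blast
      also have "\<dots> = \<Lambda> i * D z" using dVD[OF zin] by simp
      also have "\<dots> \<le> L * D sm" using Lge[OF i] sm(2) z D0[of z] L0 DL[OF i] by (intro mult_mono) auto
      finally show ?thesis .
    qed
    have per: "\<bar>\<phi>1 sm (Base (xs!i)) - \<phi>2 sm (Base (xs!i))\<bar> \<le> L * D sm * (sm - t0)" if i: "i < n" for i
    proof -
      define w where "w t = \<phi>1 t (Base (xs!i)) - \<phi>2 t (Base (xs!i))" for t
      have sub2: "{t0..sm} \<subseteq> {0..Tm}" using sm sub by auto
      have cw: "continuous_on {t0..sm} w"
        unfolding w_def by (intro continuous_on_diff continuous_on_subset[OF cont1[OF i] sub2] continuous_on_subset[OF cont2[OF i] sub2])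
      have dw: "(w has_real_derivative (eval I (\<phi>1 z) (fs!i) - eval I (\<phi>2 z) (fs!i))) (at z)" if z: "t0 < z" "z < sm" for z
      proof -
        have zT: "z \<in> {0..Tm}" "0 < z" "z < T1" "z < T2" using z sm t0ge ble by (auto simp: Tm_def)
        have d1: "((\<lambda>t. \<phi>1 t (Base (xs!i))) has_real_derivative eval I (\<phi>1 z) (fs!i)) (at z)"
          using f1(6)[OF T1p inT1[OF zT(1)] i] f1(5)[OF inT1[OF zT(1)] i] at_within_Icc_at[OF zT(2) zT(3)] by simp
        have d2: "((\<lambda>t. \<phi>2 t (Base (xs!i))) has_real_derivative eval I (\<phi>2 z) (fs!i)) (at z)"
          using f2(6)[OF T2p inT2[OF zT(1)] i] f2(5)[OF inT2[OF zT(1)] i] at_within_Icc_at[OF zT(2) zT(4)] by simp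
        show ?thesis unfolding w_def by (rule DERIV_diff[OF d1 d2])
      qed
      have "\<bar>w sm - w t0\<bar> \<le> (L * D sm) * (sm - t0)"
        by (rule mvt_bound2[OF _ cw dw]) (use sm lipz i in auto)
      moreover have "w t0 = 0" using eq0 by (simp add: w_def)
      ultimately show ?thesis by (simp add: w_def)
    qed
    have "D sm \<le> (\<Sum>i<n. L * D sm * (sm - t0))"
    proof -
      have "D sm = (\<Sum>i<n. \<bar>\<phi>1 sm (Base (xs!i)) - \<phi>2 sm (Base (xs!i))\<bar>)" by (simp add: D_def)
      also have "\<dots> \<le> (\<Sum>i<n. L * D sm * (sm - t0))" by (rule sum_mono) (use per in auto)
      finally show ?thesis .
    qed
    also have "\<dots> = real n * L * (sm - t0) * D sm" by (simp add: algebra_simps)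
    also have "\<dots> \<le> real n * L * (b - t0) * D sm" using sm D0[of sm] L0 by (intro mult_right_mono mult_left_mono) auto
    also have "\<dots> \<le> 1/2 * D sm" using nLb D0[of sm] by (intro mult_right_mono) auto
    finally have "D sm = 0" using D0[of sm] by simp
    then have zero: "D t = 0" if "t \<in> {t0..b}" for t using sm(2) that D0[of t] by force
    have "\<forall>t\<in>A. b \<le> t"
    proof
      fix t assume tA: "t \<in> A"
      then have "t0 \<le> t" unfolding t0_def using bdd by (rule cInf_lower)
      moreover have "D t \<noteq> 0" using tA by (simp add: A_def)
      ultimately show "b \<le> t" using zero by force
    qed
    then have "b \<le> t0" unfolding t0_def using t1A by (intro cInf_greatest) auto
    then show False using bgt by simp
  qed
  show ?thesis using main eqD by (auto simp: Tm_def)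
qed



lemma geom_bound:
  fixes x :: "nat \<Rightarrow> real"
  assumes d: "\<And>k. \<bar>x (Suc k) - x k\<bar> \<le> C * (1/2)^k"
  shows "m \<ge> k \<Longrightarrow> \<bar>x m - x k\<bar> \<le> 2*C*(1/2)^k - 2*C*(1/2)^m"
proof (induction m)
  case 0 then show ?case by simp
next
  case (Suc m)
  show ?case
  proof (cases "Suc m = k")
    case True then show ?thesis by simp
  next
    case False
    then have "m \<ge> k" using Suc.prems by simp
    then have "\<bar>x m - x k\<bar> \<le> 2*C*(1/2)^k - 2*C*(1/2)^m" using Suc.IH by simp
    moreover have "\<bar>x (Suc m) - x k\<bar> \<le> \<bar>x m - x k\<bar> + \<bar>x (Suc m) - x m\<bar>" by linarith
    ultimately show ?thesis using d[of m] by simp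
  qed
qed

lemma geom_conv:
  fixes x :: "nat \<Rightarrow> real"
  assumes d: "\<And>k. \<bar>x (Suc k) - x k\<bar> \<le> C * (1/2)^k"
  shows "\<exists>l. x \<longlonglongrightarrow> l \<and> (\<forall>k. \<bar>l - x k\<bar> \<le> 2*C*(1/2)^k)"
proof -
  have C0: "C \<ge> 0" using d[of 0] by simp
  have b: "\<bar>x m - x k\<bar> \<le> 2*C*(1/2)^k" if "m \<ge> k" for m k
  proof -
    have "0 \<le> 2*C*(1/2::real)^m" using C0 by simp
    then show ?thesis using geom_bound[OF d that] by linarith
  qed
  have "Cauchy x"
  proof (rule metric_CauchyI)
    fix e :: real assume e: "e > 0"
    obtain k where k: "(1/2::real)^k < e / (4 * C + 1)"
      using real_arch_pow_inv[of "e / (4 * C + 1)" "1/2"] e C0 by auto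
    have "4 * C * (1/2)^k \<le> (4*C+1) * (1/2::real)^k" by simp
    also have "\<dots> < (4*C+1) * (e / (4 * C + 1))" using k C0 by (intro mult_strict_left_mono) auto
    also have "\<dots> = e" using C0 by simp
    finally have ke: "4 * C * (1/2)^k < e" .
    show "\<exists>M. \<forall>m\<ge>M. \<forall>n\<ge>M. dist (x m) (x n) < e"
    proof (intro exI[of _ k] allI impI)
      fix m n assume "m \<ge> k" "n \<ge> k"
      then have "\<bar>x m - x k\<bar> \<le> 2*C*(1/2)^k" "\<bar>x n - x k\<bar> \<le> 2*C*(1/2)^k" using b by auto
      then show "dist (x m) (x n) < e" using ke by (simp add: dist_real_def)
    qed
  qed
  then obtain l where l: "x \<longlonglongrightarrow> l" using Cauchy_convergent_iff convergent_def by blast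
  have "\<bar>l - x k\<bar> \<le> 2*C*(1/2)^k" for k
  proof -
    have "(\<lambda>m. \<bar>x m - x k\<bar>) \<longlonglongrightarrow> \<bar>l - x k\<bar>" by (intro tendsto_intros l)
    then show ?thesis by (rule LIMSEQ_le_const2) (use b in auto)
  qed
  then show ?thesis using l by blast
qed

lemma zero_geom:
  fixes z :: real
  assumes "\<And>k. \<bar>z\<bar> \<le> K * (1/2)^k"
  shows "z = 0"
proof -
  have "(\<lambda>k. K * (1/2::real)^k) \<longlonglongrightarrow> K * 0"
    by (intro tendsto_intros) simp
  then have "\<bar>z\<bar> \<le> 0" by (intro LIMSEQ_le_const[where X = "\<lambda>k. K * (1/2)^k"]) (use assms in auto)
  then show ?thesis by simp
qed

lemma lip_cont:
  fixes f :: "real \<Rightarrow> real"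
  assumes "\<And>x y. x \<in> S \<Longrightarrow> y \<in> S \<Longrightarrow> \<bar>f x - f y\<bar> \<le> K * \<bar>x - y\<bar>" "K \<ge> 0"
  shows "continuous_on S f"
  by (rule lipschitz_on_continuous_on[of K]) (use assms in \<open>auto simp: lipschitz_on_def dist_real_def\<close>)

lemma int_diff_bound:
  fixes g :: "real \<Rightarrow> real"
  assumes c: "continuous_on {0..T} g" and b: "\<And>x. x \<in> {0..T} \<Longrightarrow> \<bar>g x\<bar> \<le> B"
    and t: "t \<in> {0..T}" and s: "s \<in> {0..T}"
  shows "\<bar>integral {0..t} g - integral {0..s} g\<bar> \<le> B * \<bar>t - s\<bar>"
proof -
  have gen: "\<bar>integral {0..b} g - integral {0..a} g\<bar> \<le> B * (b - a)" if ab: "a \<le> b" "a \<in> {0..T}" "b \<in> {0..T}" for a b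
  proof -
    have int: "g integrable_on {0..b}" using c ab by (intro integrable_continuous_real continuous_on_subset[OF c]) auto
    have cab: "continuous_on {a..b} g" by (rule continuous_on_subset[OF c]) (use ab in auto)
    have "integral {0..a} g + integral {a..b} g = integral {0..b} g"
      using ab int by (intro Henstock_Kurzweil_Integration.integral_combine) auto
    moreover have "\<bar>integral {a..b} g\<bar> \<le> B * (b - a)"
      using integral_bound[OF ab(1) cab, of B] ab b by auto
    ultimately show ?thesis by simp
  qed
  show ?thesis
  proof (cases "s \<le> t")
    case True then show ?thesis using gen[of s t] s t by simp
  next
    case False then show ?thesis using gen[of t s] s t by (simp add: abs_minus_commute)
  qed
qed



definition sbs :: "'v state \<Rightarrow> 'v set \<Rightarrow> ('v \<Rightarrow> real) \<Rightarrow> 'v state" where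
  "sbs \<omega> X u = (\<lambda>v. case v of Base a \<Rightarrow> if a \<in> X then u a else \<omega> v | Diff a \<Rightarrow> \<omega> v)"

lemma dV_sbs:
  assumes "finite V" "X \<subseteq> V"
  shows "dV V (sbs \<omega> X u1) (sbs \<omega> X u2) = (\<Sum>a\<in>X. \<bar>u1 a - u2 a\<bar>)"
proof -
  have "dV V (sbs \<omega> X u1) (sbs \<omega> X u2) = (\<Sum>v\<in>X. \<bar>sbs \<omega> X u1 (Base v) - sbs \<omega> X u2 (Base v)\<bar>)"
    unfolding dV_def by (rule sum.mono_neutral_right) (use assms in \<open>auto simp: sbs_def\<close>)
  also have "\<dots> = (\<Sum>a\<in>X. \<bar>u1 a - u2 a\<bar>)" by (rule sum.cong) (auto simp: sbs_def)
  finally show ?thesis .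
qed

lemma dV_sbs_om:
  assumes "finite V" "X \<subseteq> V"
  shows "dV V (sbs \<omega> X u) \<omega> = (\<Sum>a\<in>X. \<bar>u a - \<omega> (Base a)\<bar>)"
proof -
  have "dV V (sbs \<omega> X u) \<omega> = dV V (sbs \<omega> X u) (sbs \<omega> X (\<lambda>a. \<omega> (Base a)))"
    unfolding dV_def by (rule sum.cong) (auto simp: sbs_def)
  also have "\<dots> = (\<Sum>a\<in>X. \<bar>u a - \<omega> (Base a)\<bar>)" by (rule dV_sbs[OF assms])
  finally show ?thesis .
qed

primrec pic :: "('v \<Rightarrow> 'v state \<Rightarrow> real) \<Rightarrow> 'v state \<Rightarrow> 'v set \<Rightarrow> nat \<Rightarrow> real \<Rightarrow> 'v \<Rightarrow> real" where
  "pic G \<omega> X 0 = (\<lambda>t a. \<omega> (Base a))"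
| "pic G \<omega> X (Suc k) = (\<lambda>t a. \<omega> (Base a) + integral {0..t} (\<lambda>s. G a (sbs \<omega> X (pic G \<omega> X k s))))"

lemma exist:
  fixes G :: "'v \<Rightarrow> 'v state \<Rightarrow> real" and \<omega> :: "'v state"
  assumes finV: "finite V" and XV: "X \<subseteq> V" and lip: "\<forall>a\<in>X. loclip V (G a)"
  shows "\<exists>T>0. \<exists>u M. (\<forall>a. u 0 a = \<omega> (Base a)) \<and>
     (\<forall>t\<in>{0..T}. \<forall>a\<in>X. ((\<lambda>t. u t a) has_real_derivative G a (sbs \<omega> X (u t))) (at t within {0..T})) \<and>
     (\<forall>t\<in>{0..T}. (\<Sum>a\<in>X. \<bar>u t a - \<omega> (Base a)\<bar>) \<le> M * t)"
proof -
  have finX: "finite X" using finV XV by (rule finite_subset[rotated])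
  have "\<forall>a\<in>X. \<exists>\<delta>>0. \<exists>L\<ge>0. \<forall>s1 s2. dV V s1 \<omega> < \<delta> \<longrightarrow> dV V s2 \<omega> < \<delta> \<longrightarrow> \<bar>G a s1 - G a s2\<bar> \<le> L * dV V s1 s2"
    using lip unfolding loclip_def by blast
  then obtain \<Delta> \<Lambda> where DL: "\<And>a. a \<in> X \<Longrightarrow> \<Delta> a > 0 \<and> \<Lambda> a \<ge> 0 \<and> (\<forall>s1 s2. dV V s1 \<omega> < \<Delta> a \<longrightarrow> dV V s2 \<omega> < \<Delta> a \<longrightarrow>
        \<bar>G a s1 - G a s2\<bar> \<le> \<Lambda> a * dV V s1 s2)"
    by metis
  define \<delta> where "\<delta> = Min (insert 1 (\<Delta> ` X))"
  have \<delta>pos: "\<delta> > 0" unfolding \<delta>_def using DL finX by (auto simp: Min_gr_iff)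
  have \<delta>le: "\<delta> \<le> \<Delta> a" if "a \<in> X" for a unfolding \<delta>_def using that finX by (auto intro: Min_le)
  define L where "L = (\<Sum>a\<in>X. \<Lambda> a)"
  have L0: "L \<ge> 0" unfolding L_def using DL by (auto intro: sum_nonneg)
  have Lge: "\<Lambda> a \<le> L" if "a \<in> X" for a unfolding L_def using that DL finX by (intro member_le_sum) auto
  define B where "B a = \<bar>G a \<omega>\<bar> + \<Lambda> a * \<delta>" for a
  have B0: "B a \<ge> 0" if "a \<in> X" for a using DL[OF that] \<delta>pos by (simp add: B_def)
  define M where "M = (\<Sum>a\<in>X. B a) + 1"
  have SBM: "(\<Sum>a\<in>X. B a) \<le> M" by (simp add: M_def)
  have SB0: "(\<Sum>a\<in>X. B a) \<ge> 0" using B0 by (auto intro: sum_nonneg)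
  have Mpos: "M > 0" using SB0 by (simp add: M_def)
  define c where "c = real (card X)"
  have c0: "c \<ge> 0" by (simp add: c_def)
  define T where "T = min (\<delta> / (2*M)) (1/(2*(c+1)*(L+1)))"
  have Tpos: "T > 0" using \<delta>pos Mpos c0 L0 by (simp add: T_def)
  have MT: "M * T < \<delta>"
  proof -
    have "M * T \<le> M * (\<delta> / (2*M))" using Mpos by (intro mult_left_mono) (auto simp: T_def)
    also have "\<dots> = \<delta> / 2" using Mpos by simp
    finally show ?thesis using \<delta>pos by simp
  qed
  have cLT: "c * L * T \<le> 1/2"
  proof -
    have "c * L \<le> (c + 1) * (L + 1)" using c0 L0 by (simp add: algebra_simps)
    then have "c * L * T \<le> (c + 1) * (L + 1) * T" using Tpos by (intro mult_right_mono) auto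
    also have "\<dots> \<le> (c + 1) * (L + 1) * (1/(2*(c+1)*(L+1)))" using c0 L0 by (intro mult_left_mono) (auto simp: T_def)
    also have "\<dots> = 1/2" using c0 L0 by simp
    finally show ?thesis .
  qed
  have Gb: "\<bar>G a s\<bar> \<le> B a" if "dV V s \<omega> < \<delta>" "a \<in> X" for s a
  proof -
    have "\<bar>G a s - G a \<omega>\<bar> \<le> \<Lambda> a * dV V s \<omega>" using DL[OF that(2)] that \<delta>le[OF that(2)] \<delta>pos by auto
    also have "\<dots> \<le> \<Lambda> a * \<delta>" using that DL[OF that(2)] by (intro mult_left_mono) auto
    finally show ?thesis unfolding B_def by linarith
  qed
  have Gl: "\<bar>G a s1 - G a s2\<bar> \<le> L * dV V s1 s2" if "dV V s1 \<omega> < \<delta>" "dV V s2 \<omega> < \<delta>" "a \<in> X" for s1 s2 a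
  proof -
    have "\<bar>G a s1 - G a s2\<bar> \<le> \<Lambda> a * dV V s1 s2" using DL[OF that(3)] that \<delta>le[OF that(3)] by auto
    also have "\<dots> \<le> L * dV V s1 s2" using Lge[OF that(3)] dV_nonneg by (intro mult_right_mono) auto
    finally show ?thesis .
  qed
  define P where "P = pic G \<omega> X"
  have P0: "P k 0 a = \<omega> (Base a)" for k a by (cases k) (simp_all add: P_def)
  have PS: "P (Suc k) t a = \<omega> (Base a) + integral {0..t} (\<lambda>s. G a (sbs \<omega> X (P k s)))" for k t a
    by (simp add: P_def)
  have ballF: "dV V (sbs \<omega> X (F t)) \<omega> < \<delta>" "(\<Sum>a\<in>X. \<bar>F t a - \<omega> (Base a)\<bar>) \<le> M * t"
    if H: "\<forall>t\<in>{0..T}. \<forall>s\<in>{0..T}. \<forall>a\<in>X. \<bar>F t a - F s a\<bar> \<le> B a * \<bar>t - s\<bar>"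
      and F0: "\<forall>a. F 0 a = \<omega> (Base a)" and t: "t \<in> {0..T}" for F :: "real \<Rightarrow> 'v \<Rightarrow> real" and t
  proof -
    have "(\<Sum>a\<in>X. \<bar>F t a - \<omega> (Base a)\<bar>) = (\<Sum>a\<in>X. \<bar>F t a - F 0 a\<bar>)" using F0 by simp
    also have "\<dots> \<le> (\<Sum>a\<in>X. B a * t)"
    proof (rule sum_mono)
      fix a assume a: "a \<in> X"
      have z: "0 \<in> {0..T}" using Tpos by simp
      have "\<bar>F t a - F 0 a\<bar> \<le> B a * \<bar>t - 0\<bar>" using H t z a by blast
      then show "\<bar>F t a - F 0 a\<bar> \<le> B a * t" using t by simp
    qed
    also have "\<dots> = (\<Sum>a\<in>X. B a) * t" by (simp add: sum_distrib_right)
    also have "\<dots> \<le> M * t" using SBM t by (intro mult_right_mono) auto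
    finally show le: "(\<Sum>a\<in>X. \<bar>F t a - \<omega> (Base a)\<bar>) \<le> M * t" .
    have "M * t \<le> M * T" using t Mpos by (intro mult_left_mono) auto
    then show "dV V (sbs \<omega> X (F t)) \<omega> < \<delta>" using le MT dV_sbs_om[OF finV XV] by simp
  qed
  have contF: "continuous_on {0..T} (\<lambda>s. G a (sbs \<omega> X (F s)))"
    if H: "\<forall>t\<in>{0..T}. \<forall>s\<in>{0..T}. \<forall>a\<in>X. \<bar>F t a - F s a\<bar> \<le> B a * \<bar>t - s\<bar>"
      and F0: "\<forall>a. F 0 a = \<omega> (Base a)" and a: "a \<in> X" for F :: "real \<Rightarrow> 'v \<Rightarrow> real" and a
  proof (rule lip_cont[of _ _ "L * M"])
    fix x y assume x: "x \<in> {0..T}" and y: "y \<in> {0..T}"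
    have "\<bar>G a (sbs \<omega> X (F x)) - G a (sbs \<omega> X (F y))\<bar> \<le> L * dV V (sbs \<omega> X (F x)) (sbs \<omega> X (F y))"
      using Gl ballF(1)[OF H F0] x y a by blast
    also have "\<dots> = L * (\<Sum>b\<in>X. \<bar>F x b - F y b\<bar>)" by (simp add: dV_sbs[OF finV XV])
    also have "\<dots> \<le> L * (\<Sum>b\<in>X. B b * \<bar>x - y\<bar>)" using H x y L0 by (intro mult_left_mono sum_mono) auto
    also have "\<dots> = L * ((\<Sum>b\<in>X. B b) * \<bar>x - y\<bar>)" by (simp add: sum_distrib_right)
    also have "\<dots> \<le> L * (M * \<bar>x - y\<bar>)" using SBM L0 by (intro mult_left_mono mult_right_mono) auto
    finally show "\<bar>G a (sbs \<omega> X (F x)) - G a (sbs \<omega> X (F y))\<bar> \<le> L * M * \<bar>x - y\<bar>" by (simp add: mult.assoc)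
  next
    show "L * M \<ge> 0" using L0 Mpos by simp
  qed
  have I1: "\<forall>t\<in>{0..T}. \<forall>s\<in>{0..T}. \<forall>a\<in>X. \<bar>P k t a - P k s a\<bar> \<le> B a * \<bar>t - s\<bar>" for k
  proof (induction k)
    case 0 then show ?case using B0 by (simp add: P_def)
  next
    case (Suc k)
    have F0: "\<forall>a. P k 0 a = \<omega> (Base a)" using P0 by simp
    show ?case
    proof (intro ballI)
      fix t s a assume t: "t \<in> {0..T}" and s: "s \<in> {0..T}" and a: "a \<in> X"
      have "\<bar>integral {0..t} (\<lambda>s. G a (sbs \<omega> X (P k s))) - integral {0..s} (\<lambda>s. G a (sbs \<omega> X (P k s)))\<bar> \<le> B a * \<bar>t - s\<bar>"
        by (rule int_diff_bound[OF contF[OF Suc F0 a] _ t s]) (use Gb ballF(1)[OF Suc F0] a in blast)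
      then show "\<bar>P (Suc k) t a - P (Suc k) s a\<bar> \<le> B a * \<bar>t - s\<bar>" by (simp add: PS)
    qed
  qed
  have F0P: "\<forall>a. P k 0 a = \<omega> (Base a)" for k using P0 by simp
  have intP: "(\<lambda>s. G a (sbs \<omega> X (P k s))) integrable_on {0..t}" if "t \<in> {0..T}" "a \<in> X" for k t a
    by (rule integrable_continuous_real, rule continuous_on_subset[OF contF[OF I1 F0P that(2)]]) (use that in auto)
  have I3: "\<forall>t\<in>{0..T}. (\<Sum>a\<in>X. \<bar>P (Suc k) t a - P k t a\<bar>) \<le> M * T * (1/2)^k" for k
  proof (induction k)
    case 0
    show ?case
    proof
      fix t assume t: "t \<in> {0..T}"
      have "(\<Sum>a\<in>X. \<bar>P (Suc 0) t a - P 0 t a\<bar>) = (\<Sum>a\<in>X. \<bar>P (Suc 0) t a - \<omega> (Base a)\<bar>)" by (simp add: P_def)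
      also have "\<dots> \<le> M * t" using ballF(2)[OF I1 F0P t] .
      also have "\<dots> \<le> M * T" using t Mpos by (intro mult_left_mono) auto
      finally show "(\<Sum>a\<in>X. \<bar>P (Suc 0) t a - P 0 t a\<bar>) \<le> M * T * (1/2)^0" by simp
    qed
  next
    case (Suc k)
    show ?case
    proof
      fix t assume t: "t \<in> {0..T}"
      have each: "\<bar>P (Suc (Suc k)) t a - P (Suc k) t a\<bar> \<le> L * (M * T * (1/2)^k) * T" if a: "a \<in> X" for a
      proof -
        have "P (Suc (Suc k)) t a - P (Suc k) t a =
            integral {0..t} (\<lambda>s. G a (sbs \<omega> X (P (Suc k) s)) - G a (sbs \<omega> X (P k s)))"
        proof -
          have "P (Suc (Suc k)) t a - P (Suc k) t a = integral {0..t} (\<lambda>s. G a (sbs \<omega> X (P (Suc k) s))) - integral {0..t} (\<lambda>s. G a (sbs \<omega> X (P k s)))"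
            using PS[of "Suc k" t a] PS[of k t a] by simp
          also have "\<dots> = integral {0..t} (\<lambda>s. G a (sbs \<omega> X (P (Suc k) s)) - G a (sbs \<omega> X (P k s)))"
            by (rule integral_diff[symmetric]) (use intP[OF t a] in auto)
          finally show ?thesis .
        qed
        moreover have "\<bar>integral {0..t} (\<lambda>s. G a (sbs \<omega> X (P (Suc k) s)) - G a (sbs \<omega> X (P k s)))\<bar>
             \<le> L * (M * T * (1/2)^k) * (t - 0)"
        proof (rule integral_bound[where 'a=real and a=0 and b=t, unfolded real_norm_def])
          show "0 \<le> t" using t by simp
          show "continuous_on {0..t} (\<lambda>s. G a (sbs \<omega> X (P (Suc k) s)) - G a (sbs \<omega> X (P k s)))"
            by (intro continuous_on_diff; rule continuous_on_subset[OF contF[OF I1 F0P a]]) (use t in auto)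
          fix s assume s: "s \<in> {0..t}"
          then have sT: "s \<in> {0..T}" using t by auto
          have "\<bar>G a (sbs \<omega> X (P (Suc k) s)) - G a (sbs \<omega> X (P k s))\<bar> \<le> L * dV V (sbs \<omega> X (P (Suc k) s)) (sbs \<omega> X (P k s))"
            using Gl ballF(1)[OF I1 F0P sT] a by blast
          also have "\<dots> = L * (\<Sum>b\<in>X. \<bar>P (Suc k) s b - P k s b\<bar>)" by (simp add: dV_sbs[OF finV XV])
          also have "\<dots> \<le> L * (M * T * (1/2)^k)" using Suc sT L0 by (intro mult_left_mono) auto
          finally show "\<bar>G a (sbs \<omega> X (P (Suc k) s)) - G a (sbs \<omega> X (P k s))\<bar> \<le> L * (M * T * (1/2)^k)" .
        qed
        moreover have "L * (M * T * (1/2)^k) * t \<le> L * (M * T * (1/2)^k) * T"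
          using t L0 Mpos Tpos by (intro mult_left_mono) auto
        ultimately show ?thesis by simp
      qed
      have "(\<Sum>a\<in>X. \<bar>P (Suc (Suc k)) t a - P (Suc k) t a\<bar>) \<le> (\<Sum>a\<in>X. L * (M * T * (1/2)^k) * T)"
        by (rule sum_mono) (use each in auto)
      also have "\<dots> = (c * L * T) * (M * T * (1/2)^k)" by (simp add: c_def algebra_simps)
      also have "\<dots> \<le> 1/2 * (M * T * (1/2)^k)" using cLT Mpos Tpos by (intro mult_right_mono) auto
      also have "\<dots> = M * T * (1/2)^(Suc k)" by simp
      finally show "(\<Sum>a\<in>X. \<bar>P (Suc (Suc k)) t a - P (Suc k) t a\<bar>) \<le> M * T * (1/2)^(Suc k)" .
    qed
  qed
  define u where "u t a = lim (\<lambda>k. P k t a)" for t a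
  have uconv: "(\<lambda>k. P k t a) \<longlonglongrightarrow> u t a \<and> (\<forall>k. \<bar>u t a - P k t a\<bar> \<le> 2 * (M * T) * (1/2)^k)"
    if t: "t \<in> {0..T}" and a: "a \<in> X" for t a
  proof -
    have "\<bar>P (Suc k) t a - P k t a\<bar> \<le> M * T * (1/2)^k" for k
    proof -
      have "\<bar>P (Suc k) t a - P k t a\<bar> \<le> (\<Sum>b\<in>X. \<bar>P (Suc k) t b - P k t b\<bar>)"
        using a finX by (intro member_le_sum) auto
      then show ?thesis using I3 t by (meson order_trans)
    qed
    from geom_conv[of "\<lambda>k. P k t a", OF this] obtain l where
      l: "(\<lambda>k. P k t a) \<longlonglongrightarrow> l" "\<forall>k. \<bar>l - P k t a\<bar> \<le> 2 * (M * T) * (1/2)^k" by auto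
    have "u t a = l" unfolding u_def using l(1) by (rule limI)
    then show ?thesis using l by simp
  qed
  have U0: "u 0 a = \<omega> (Base a)" for a
  proof -
    have "(\<lambda>k. P k 0 a) = (\<lambda>k. \<omega> (Base a))" using P0 by simp
    then show ?thesis unfolding u_def by (simp add: limI)
  qed
  have U1: "\<forall>t\<in>{0..T}. \<forall>s\<in>{0..T}. \<forall>a\<in>X. \<bar>u t a - u s a\<bar> \<le> B a * \<bar>t - s\<bar>"
  proof (intro ballI)
    fix t s a assume t: "t \<in> {0..T}" and s: "s \<in> {0..T}" and a: "a \<in> X"
    have "(\<lambda>k. \<bar>P k t a - P k s a\<bar>) \<longlonglongrightarrow> \<bar>u t a - u s a\<bar>"
      using uconv[OF t a] uconv[OF s a] by (intro tendsto_intros) auto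
    then show "\<bar>u t a - u s a\<bar> \<le> B a * \<bar>t - s\<bar>"
      by (rule LIMSEQ_le_const2) (use I1 t s a in auto)
  qed
  have U0': "\<forall>a. u 0 a = \<omega> (Base a)" using U0 by simp
  have U2: "u t a = \<omega> (Base a) + integral {0..t} (\<lambda>s. G a (sbs \<omega> X (u s)))" if t: "t \<in> {0..T}" and a: "a \<in> X" for t a
  proof -
    define z where "z = u t a - (\<omega> (Base a) + integral {0..t} (\<lambda>s. G a (sbs \<omega> X (u s))))"
    have "\<bar>z\<bar> \<le> (2 * (M * T) + L * (c * (2 * (M * T))) * T) * (1/2)^k" for k
    proof -
      have intu: "(\<lambda>s. G a (sbs \<omega> X (u s))) integrable_on {0..t}"
        by (rule integrable_continuous_real, rule continuous_on_subset[OF contF[OF U1 U0' a]]) (use t in auto)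
      have e1: "\<bar>u t a - P (Suc k) t a\<bar> \<le> 2 * (M * T) * (1/2)^k"
      proof -
        have "\<bar>u t a - P (Suc k) t a\<bar> \<le> 2 * (M * T) * (1/2)^(Suc k)" using uconv[OF t a] by blast
        also have "\<dots> \<le> 2 * (M * T) * (1/2)^k" using Mpos Tpos by (intro mult_left_mono) (auto simp: power_decreasing)
        finally show ?thesis .
      qed
      have eqI: "P (Suc k) t a - (\<omega> (Base a) + integral {0..t} (\<lambda>s. G a (sbs \<omega> X (u s)))) =
          integral {0..t} (\<lambda>s. G a (sbs \<omega> X (P k s)) - G a (sbs \<omega> X (u s)))"
      proof -
        have "P (Suc k) t a - (\<omega> (Base a) + integral {0..t} (\<lambda>s. G a (sbs \<omega> X (u s)))) = integral {0..t} (\<lambda>s. G a (sbs \<omega> X (P k s))) - integral {0..t} (\<lambda>s. G a (sbs \<omega> X (u s)))"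
          using PS[of k t a] by simp
        also have "\<dots> = integral {0..t} (\<lambda>s. G a (sbs \<omega> X (P k s)) - G a (sbs \<omega> X (u s)))"
          by (rule integral_diff[symmetric]) (use intP[OF t a] intu in auto)
        finally show ?thesis .
      qed
      have bI: "\<bar>integral {0..t} (\<lambda>s. G a (sbs \<omega> X (P k s)) - G a (sbs \<omega> X (u s)))\<bar>
             \<le> L * (c * (2 * (M * T) * (1/2)^k)) * (t - 0)"
      proof (rule integral_bound[where 'a=real and a=0 and b=t, unfolded real_norm_def])
        show "0 \<le> t" using t by simp
        show "continuous_on {0..t} (\<lambda>s. G a (sbs \<omega> X (P k s)) - G a (sbs \<omega> X (u s)))"
          by (intro continuous_on_diff; rule continuous_on_subset[OF contF[OF I1 F0P a]]
              continuous_on_subset[OF contF[OF U1 U0' a]]) (use t in auto)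
        fix s assume s: "s \<in> {0..t}"
        then have sT: "s \<in> {0..T}" using t by auto
        have "\<bar>G a (sbs \<omega> X (P k s)) - G a (sbs \<omega> X (u s))\<bar> \<le> L * dV V (sbs \<omega> X (P k s)) (sbs \<omega> X (u s))"
          using Gl ballF(1)[OF I1 F0P sT] ballF(1)[OF U1 U0' sT] a by blast
        also have "\<dots> = L * (\<Sum>b\<in>X. \<bar>P k s b - u s b\<bar>)" by (simp add: dV_sbs[OF finV XV])
        also have "\<dots> \<le> L * (\<Sum>b\<in>X. 2 * (M * T) * (1/2)^k)"
          using uconv[OF sT] L0 by (intro mult_left_mono sum_mono) (auto simp: abs_minus_commute)
        also have "\<dots> = L * (c * (2 * (M * T) * (1/2)^k))" by (simp add: c_def)
        finally show "\<bar>G a (sbs \<omega> X (P k s)) - G a (sbs \<omega> X (u s))\<bar> \<le> L * (c * (2 * (M * T) * (1/2)^k))" .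
      qed
      have K0: "0 \<le> L * (c * (2 * (M * T) * (1/2::real)^k))"
        using L0 Mpos Tpos c0 by simp
      have tI: "L * (c * (2 * (M * T) * (1/2)^k)) * t \<le> L * (c * (2 * (M * T) * (1/2)^k)) * T"
        using t K0 by (intro mult_left_mono) auto
      have e2: "\<bar>P (Suc k) t a - (\<omega> (Base a) + integral {0..t} (\<lambda>s. G a (sbs \<omega> X (u s))))\<bar>
          \<le> L * (c * (2 * (M * T) * (1/2)^k)) * T"
        unfolding eqI using bI[unfolded diff_zero] tI by linarith
      have "\<bar>z\<bar> \<le> 2 * (M * T) * (1/2)^k + L * (c * (2 * (M * T) * (1/2)^k)) * T"
        using e1 e2 unfolding z_def by linarith
      also have "\<dots> = (2 * (M * T) + L * (c * (2 * (M * T))) * T) * (1/2)^k" by (simp add: algebra_simps)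
      finally show ?thesis .
    qed
    then have "z = 0" by (rule zero_geom)
    then show ?thesis by (simp add: z_def)
  qed
  have deriv: "((\<lambda>t. u t a) has_real_derivative G a (sbs \<omega> X (u t))) (at t within {0..T})"
    if t: "t \<in> {0..T}" and a: "a \<in> X" for t a
  proof -
    have "((\<lambda>t. \<omega> (Base a) + integral {0..t} (\<lambda>s. G a (sbs \<omega> X (u s)))) has_real_derivative
        0 + G a (sbs \<omega> X (u t))) (at t within {0..T})"
      by (intro DERIV_add DERIV_const integral_has_real_derivative contF[OF U1 U0' a] t)
    then have "((\<lambda>t. \<omega> (Base a) + integral {0..t} (\<lambda>s. G a (sbs \<omega> X (u s)))) has_real_derivative
        G a (sbs \<omega> X (u t))) (at t within {0..T})" by simp
    then show ?thesis
      by (rule has_field_derivative_transform_within[OF _ zero_less_one t]) (use U2 a in auto)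
  qed
  have bnd: "\<forall>t\<in>{0..T}. (\<Sum>a\<in>X. \<bar>u t a - \<omega> (Base a)\<bar>) \<le> M * t"
  proof
    fix t assume "t \<in> {0..T}"
    then show "(\<Sum>a\<in>X. \<bar>u t a - \<omega> (Base a)\<bar>) \<le> M * t" by (rule ballF(2)[OF U1 U0'])
  qed
  have der: "\<forall>t\<in>{0..T}. \<forall>a\<in>X. ((\<lambda>t. u t a) has_real_derivative G a (sbs \<omega> X (u t))) (at t within {0..T})"
    using deriv by blast
  have "(\<forall>a. u 0 a = \<omega> (Base a)) \<and>
     (\<forall>t\<in>{0..T}. \<forall>a\<in>X. ((\<lambda>t. u t a) has_real_derivative G a (sbs \<omega> X (u t))) (at t within {0..T})) \<and>
     (\<forall>t\<in>{0..T}. (\<Sum>a\<in>X. \<bar>u t a - \<omega> (Base a)\<bar>) \<le> M * t)"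
    using U0 der bnd by simp
  then have "\<exists>u M. (\<forall>a. u 0 a = \<omega> (Base a)) \<and>
     (\<forall>t\<in>{0..T}. \<forall>a\<in>X. ((\<lambda>t. u t a) has_real_derivative G a (sbs \<omega> X (u t))) (at t within {0..T})) \<and>
     (\<forall>t\<in>{0..T}. (\<Sum>a\<in>X. \<bar>u t a - \<omega> (Base a)\<bar>) \<le> M * t)" by blast
  then show ?thesis using Tpos by blast
qed



lemma wf_ode_zip:
  assumes "length fs = length xs" "wf_ode ar (zip xs fs)"
  shows "distinct xs" "\<forall>f\<in>set fs. dfree f \<and> wf_trm ar f"
proof -
  show "distinct xs" using assms unfolding wf_ode_def by simp
  show "\<forall>f\<in>set fs. dfree f \<and> wf_trm ar f"
  proof
    fix f assume "f \<in> set fs"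
    then obtain i where i: "i < length fs" "f = fs!i" by (auto simp: in_set_conv_nth)
    then have "(xs!i, f) \<in> set (zip xs fs)" using assms(1) by (auto simp: in_set_zip)
    then show "dfree f \<and> wf_trm ar f" using assms(2) unfolding wf_ode_def by auto
  qed
qed

lemma uniq_part:
  fixes I :: "'f \<Rightarrow> real list \<Rightarrow> real" and ar :: "'f \<Rightarrow> nat"
  assumes sm: "\<forall>g. smooth_len (ar g) (I g)"
  shows "\<forall>(xs :: 'v list) fs Q1 Q2 P.
      length fs = length xs \<and> wf_ode ar (zip xs fs) \<and>
      semianalytic Q1 \<and> wf_fml ar Q1 \<and> semianalytic Q2 \<and> wf_fml ar Q2 \<and> wf_fml ar P \<longrightarrow>
      valid I (Iff (And (Dia (zip xs fs) Q1 P) (Dia (zip xs fs) Q2 P))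
                   (Dia (zip xs fs) (And Q1 Q2) P))"
proof (intro allI impI)
  fix xs :: "'v list" and fs :: "('v, 'f) trm list" and Q1 Q2 P :: "('v, 'f) fml"
  assume h: "length fs = length xs \<and> wf_ode ar (zip xs fs) \<and>
      semianalytic Q1 \<and> wf_fml ar Q1 \<and> semianalytic Q2 \<and> wf_fml ar Q2 \<and> wf_fml ar P"
  then have len: "length fs = length xs" and dx: "distinct xs" and df: "\<forall>f\<in>set fs. dfree f \<and> wf_trm ar f"
    using wf_ode_zip[of fs xs ar] by auto
  show "valid I (Iff (And (Dia (zip xs fs) Q1 P) (Dia (zip xs fs) Q2 P)) (Dia (zip xs fs) (And Q1 Q2) P))"
    unfolding valid_def
  proof
    fix \<omega>
    show "sem I (Iff (And (Dia (zip xs fs) Q1 P) (Dia (zip xs fs) Q2 P)) (Dia (zip xs fs) (And Q1 Q2) P)) \<omega>"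
    proof (simp only: sem_Iff, intro iffI)
      assume "sem I (And (Dia (zip xs fs) Q1 P) (Dia (zip xs fs) Q2 P)) \<omega>"
      then obtain T1 \<phi>1 T2 \<phi>2 where s1: "sol I (zip xs fs) \<omega> T1 \<phi>1" and q1: "\<forall>\<zeta>\<in>{0..T1}. sem I Q1 (\<phi>1 \<zeta>)"
        and p1: "sem I P (\<phi>1 T1)"
        and s2: "sol I (zip xs fs) \<omega> T2 \<phi>2" and q2: "\<forall>\<zeta>\<in>{0..T2}. sem I Q2 (\<phi>2 \<zeta>)"
        and p2: "sem I P (\<phi>2 T2)"
        by (auto simp: ode_rel_sol)
      have eq: "\<forall>t\<in>{0..min T1 T2}. \<phi>1 t = \<phi>2 t" by (rule uniq_sol[OF sm len dx df s1 s2])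
      show "sem I (Dia (zip xs fs) (And Q1 Q2) P) \<omega>"
      proof (cases "T1 \<le> T2")
        case True
        have "\<forall>\<zeta>\<in>{0..T1}. sem I (And Q1 Q2) (\<phi>1 \<zeta>)" using q1 q2 eq True by auto
        then show ?thesis using s1 p1 by (auto simp: ode_rel_sol)
      next
        case False
        have "\<forall>\<zeta>\<in>{0..T2}. sem I (And Q1 Q2) (\<phi>2 \<zeta>)" using q1 q2 eq False by force
        then show ?thesis using s2 p2 by (auto simp: ode_rel_sol)
      qed
    next
      assume "sem I (Dia (zip xs fs) (And Q1 Q2) P) \<omega>"
      then show "sem I (And (Dia (zip xs fs) Q1 P) (Dia (zip xs fs) Q2 P)) \<omega>"
        by (auto simp: ode_rel_sol)
    qed
  qed
qed

lemma dadj_part: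
  fixes I :: "'f \<Rightarrow> real list \<Rightarrow> real" and ar :: "'f \<Rightarrow> nat"
  shows "\<forall>(xs :: 'v list) fs ys Q.
      length fs = length xs \<and> wf_ode ar (zip xs fs) \<and>
      length ys = length xs \<and> distinct ys \<and> set ys \<inter> set xs = {} \<and>
      (\<forall>y\<in>set ys. y \<notin> (\<Union>f\<in>set fs. vars_trm f) \<and> y \<notin> vars_fml Q) \<and>
      semianalytic Q \<and> wf_fml ar Q \<longrightarrow>
      valid I (Iff (Dia (zip xs fs) Q (VecEq xs ys))
                   (Dia (zip ys (map (\<lambda>f. Neg (rename_trm (ren xs ys) f)) fs))
                        (rename_fml (ren xs ys) Q) (VecEq ys xs)))"
proof (intro allI impI)
  fix xs ys :: "'v list" and fs :: "('v, 'f) trm list" and Q :: "('v, 'f) fml"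
  assume h: "length fs = length xs \<and> wf_ode ar (zip xs fs) \<and>
      length ys = length xs \<and> distinct ys \<and> set ys \<inter> set xs = {} \<and>
      (\<forall>y\<in>set ys. y \<notin> (\<Union>f\<in>set fs. vars_trm f) \<and> y \<notin> vars_fml Q) \<and>
      semianalytic Q \<and> wf_fml ar Q"
  then have dx: "distinct xs" and df: "\<forall>f\<in>set fs. dfree f \<and> wf_trm ar f"
    using wf_ode_zip[of fs xs ar] by auto
  show "valid I (Iff (Dia (zip xs fs) Q (VecEq xs ys))
                   (Dia (zip ys (map (\<lambda>f. Neg (rename_trm (ren xs ys) f)) fs))
                        (rename_fml (ren xs ys) Q) (VecEq ys xs)))"
    unfolding valid_def sem_Iff
    by (intro allI dadj) (use h dx df in auto)
qed



lemma deriv_nonzero_move: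
  fixes f :: "real \<Rightarrow> real"
  assumes "(f has_real_derivative l) (at 0 within {0..T})" "l \<noteq> 0"
  shows "\<exists>d>0. \<forall>h>0. h \<le> T \<longrightarrow> h < d \<longrightarrow> f h \<noteq> f 0"
proof (cases "l > 0")
  case True
  from has_real_derivative_pos_inc_right[OF assms(1) True] obtain d where
    "d > 0" "\<forall>h>0. 0 + h \<in> {0..T} \<longrightarrow> h < d \<longrightarrow> f 0 < f (0 + h)" by blast
  then show ?thesis by (intro exI[of _ d]) auto
next
  case False
  then have "l < 0" using assms(2) by simp
  from has_real_derivative_neg_dec_right[OF assms(1) this] obtain d where
    "d > 0" "\<forall>h>0. 0 + h \<in> {0..T} \<longrightarrow> h < d \<longrightarrow> f (0 + h) < f 0" by blast
  then show ?thesis by (intro exI[of _ d]) force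
qed

lemma cont_part:
  fixes I :: "'f \<Rightarrow> real list \<Rightarrow> real" and ar :: "'f \<Rightarrow> nat"
  assumes sm: "\<forall>g. smooth_len (ar g) (I g)"
  shows "\<forall>(xs :: 'v list) fs ys e.
      length fs = length xs \<and> wf_ode ar (zip xs fs) \<and>
      length ys = length xs \<and> distinct ys \<and> set ys \<inter> set xs = {} \<and>
      (\<forall>y\<in>set ys. y \<notin> (\<Union>f\<in>set fs. vars_trm f) \<and> y \<notin> vars_trm e) \<and>
      dfree e \<and> wf_trm ar e \<and>
      (\<forall>\<omega>. \<exists>f\<in>set fs. eval I \<omega> f \<noteq> 0) \<longrightarrow>
      valid I (Imp (VecEq xs ys)
                   (Iff (Dia (zip xs fs) (Gt e (Const 0)) (Not (VecEq xs ys)))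
                        (Gt e (Const 0))))"
proof (intro allI impI)
  fix xs ys :: "'v list" and fs :: "('v, 'f) trm list" and e :: "('v, 'f) trm"
  assume h: "length fs = length xs \<and> wf_ode ar (zip xs fs) \<and>
      length ys = length xs \<and> distinct ys \<and> set ys \<inter> set xs = {} \<and>
      (\<forall>y\<in>set ys. y \<notin> (\<Union>f\<in>set fs. vars_trm f) \<and> y \<notin> vars_trm e) \<and>
      dfree e \<and> wf_trm ar e \<and>
      (\<forall>\<omega>. \<exists>f\<in>set fs. eval I \<omega> f \<noteq> 0)"
  then have len: "length fs = length xs" and leny: "length ys = length xs" and disj: "set ys \<inter> set xs = {}"
    and dfe: "dfree e" and wfe: "wf_trm ar e" and nz: "\<forall>\<omega>. \<exists>f\<in>set fs. eval I \<omega> f \<noteq> 0" by auto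
  from h have dx: "distinct xs" and df: "\<forall>f\<in>set fs. dfree f \<and> wf_trm ar f"
    using wf_ode_zip[of fs xs ar] by auto
  define n where "n = length xs"
  define X where "X = set xs"
  define V where "V = X \<union> (\<Union>f\<in>set fs. vars_trm f) \<union> vars_trm e"
  have finV: "finite V" unfolding V_def X_def by (simp add: finite_vars_trm)
  have XV: "X \<subseteq> V" unfolding V_def by auto
  have VE1: "sem I (VecEq xs ys) s \<longleftrightarrow> (\<forall>i<n. s (Base (xs!i)) = s (Base (ys!i)))" for s
    using sem_VecEq[of xs ys] leny by (simp add: n_def)
  define G where "G a s = eval I s (the (map_of (zip xs fs) a))" for a s
  have Gi: "G (xs!i) s = eval I s (fs!i)" if "i < n" for i s
    using map_of_zip_nth[of xs fs i] len dx that by (simp add: G_def n_def)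
  have fsi: "fs!i \<in> set fs" if "i < n" for i using that len by (simp add: n_def)
  have lipG: "\<forall>a\<in>X. loclip V (G a)"
  proof
    fix a assume "a \<in> X"
    then obtain i where i: "i < n" "a = xs!i" by (auto simp: X_def n_def in_set_conv_nth)
    have "loclip V (\<lambda>s. eval I s (fs!i))"
      using eval_loclip[OF sm finV] df fsi[OF i(1)] unfolding V_def by blast
    moreover have "G a = (\<lambda>s. eval I s (fs!i))" using Gi[OF i(1)] i(2) by (simp add: fun_eq_iff)
    ultimately show "loclip V (G a)" by simp
  qed
  have lipe: "loclip V (\<lambda>s. eval I s e)"
    using eval_loclip[OF sm finV] dfe wfe unfolding V_def by blast
  show "valid I (Imp (VecEq xs ys) (Iff (Dia (zip xs fs) (Gt e (Const 0)) (Not (VecEq xs ys))) (Gt e (Const 0))))"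
    unfolding valid_def
  proof (intro allI, simp only: sem_Imp sem_Iff, intro impI iffI)
    fix \<omega> assume "sem I (Dia (zip xs fs) (Gt e (Const 0)) (Not (VecEq xs ys))) \<omega>"
    then obtain T \<phi> where s: "sol I (zip xs fs) \<omega> T \<phi>" and q: "\<forall>\<zeta>\<in>{0..T}. eval I (\<phi> \<zeta>) e > 0"
      by (auto simp: ode_rel_sol)
    have T0: "0 \<in> {0..T}" using sol_facts(1)[OF len s] by simp
    have "eval I (\<phi> 0) e = eval I \<omega> e" by (rule eval_coinc[OF dfe]) (use sol_facts(2)[OF len s] in auto)
    moreover have "eval I (\<phi> 0) e > 0" using q T0 by blast
    ultimately show "sem I (Gt e (Const 0)) \<omega>" by simp
  next
    fix \<omega> assume ve: "sem I (VecEq xs ys) \<omega>" and ep: "sem I (Gt e (Const 0)) \<omega>"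
    define e0 where "e0 = eval I \<omega> e"
    have e0p: "e0 > 0" using ep by (simp add: e0_def)
    obtain T u M where Tp: "T > 0" and U0: "\<forall>a. u 0 a = \<omega> (Base a)"
      and Ud: "\<forall>t\<in>{0..T}. \<forall>a\<in>X. ((\<lambda>t. u t a) has_real_derivative G a (sbs \<omega> X (u t))) (at t within {0..T})"
      and UM: "\<forall>t\<in>{0..T}. (\<Sum>a\<in>X. \<bar>u t a - \<omega> (Base a)\<bar>) \<le> M * t"
      using exist[OF finV XV lipG, of \<omega>] by blast
    define \<phi> where "\<phi> t = (\<lambda>v. case v of Base a \<Rightarrow> if a \<in> X then u t a else \<omega> v
        | Diff a \<Rightarrow> if a \<in> X then G a (sbs \<omega> X (u t)) else \<omega> v)" for t
    have \<phi>base: "\<phi> t (Base a) = sbs \<omega> X (u t) (Base a)" for t a by (simp add: \<phi>_def sbs_def)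
    have evcoinc: "eval I (\<phi> t) f = eval I (sbs \<omega> X (u t)) f" if "dfree f" for t f
      by (rule eval_coinc[OF that]) (simp add: \<phi>base)
    obtain i0 where i0: "i0 < n" "eval I \<omega> (fs!i0) \<noteq> 0"
      using nz len by (metis in_set_conv_nth n_def)
    define a0 where "a0 = xs!i0"
    have a0X: "a0 \<in> X" using i0 by (simp add: a0_def X_def n_def)
    have sb0: "sbs \<omega> X (u 0) (Base v) = \<omega> (Base v)" for v using U0 by (simp add: sbs_def)
    have "G a0 (sbs \<omega> X (u 0)) = eval I \<omega> (fs!i0)"
      unfolding a0_def Gi[OF i0(1)] by (rule eval_coinc) (use df fsi[OF i0(1)] sb0 in auto)
    then have "G a0 (sbs \<omega> X (u 0)) \<noteq> 0" using i0 by simp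
    moreover have "((\<lambda>t. u t a0) has_real_derivative G a0 (sbs \<omega> X (u 0))) (at 0 within {0..T})"
      using Ud a0X Tp by auto
    ultimately obtain d1 where d1: "d1 > 0" "\<forall>h>0. h \<le> T \<longrightarrow> h < d1 \<longrightarrow> u h a0 \<noteq> u 0 a0"
      using deriv_nonzero_move by blast
    obtain \<delta>e Le where le: "\<delta>e > 0" "Le \<ge> 0" "\<And>s1 s2. dV V s1 \<omega> < \<delta>e \<Longrightarrow> dV V s2 \<omega> < \<delta>e \<Longrightarrow>
        \<bar>eval I s1 e - eval I s2 e\<bar> \<le> Le * dV V s1 s2"
      using loclipE[OF lipe, of \<omega>] by metis
    define Mp where "Mp = \<bar>M\<bar> + 1"
    have Mpp: "Mp > 0" by (simp add: Mp_def)
    define T' where "T' = min T (min (\<delta>e / (2 * Mp)) (min (e0 / (2 * (Le + 1) * Mp)) (d1 / 2)))"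
    have T'p: "T' > 0" using Tp le e0p d1 Mpp by (simp add: T'_def)
    have T'T: "T' \<le> T" by (simp add: T'_def)
    have dist_t: "dV V (sbs \<omega> X (u t)) \<omega> \<le> Mp * t" if t: "t \<in> {0..T}" for t
    proof -
      have "dV V (sbs \<omega> X (u t)) \<omega> = (\<Sum>a\<in>X. \<bar>u t a - \<omega> (Base a)\<bar>)" by (rule dV_sbs_om[OF finV XV])
      also have "\<dots> \<le> M * t" using UM t by blast
      also have "\<dots> \<le> Mp * t" using t by (intro mult_right_mono) (auto simp: Mp_def)
      finally show ?thesis .
    qed
    have epos: "eval I (\<phi> t) e > 0" if t: "t \<in> {0..T'}" for t
    proof -
      have tT: "t \<in> {0..T}" using t T'T by auto
      have "Mp * t \<le> Mp * (\<delta>e / (2 * Mp))" using t Mpp by (intro mult_left_mono) (auto simp: T'_def)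
      also have "\<dots> = \<delta>e / 2" using Mpp by simp
      finally have "dV V (sbs \<omega> X (u t)) \<omega> < \<delta>e" using dist_t[OF tT] le(1) by simp
      then have "\<bar>eval I (sbs \<omega> X (u t)) e - eval I \<omega> e\<bar> \<le> Le * dV V (sbs \<omega> X (u t)) \<omega>"
        using le(3)[of "sbs \<omega> X (u t)" \<omega>] le(1) by simp
      also have "\<dots> \<le> Le * (Mp * t)" using dist_t[OF tT] le(2) by (intro mult_left_mono) auto
      also have "\<dots> \<le> Le * (Mp * (e0 / (2 * (Le + 1) * Mp)))"
        using t Mpp le(2) by (intro mult_left_mono) (auto simp: T'_def)
      also have "\<dots> = Le * (e0 / (2 * (Le + 1)))"
      proof -
        have "Mp * (e0 / (2 * (Le + 1) * Mp)) = e0 / (2 * (Le + 1))" using Mpp le(2) by (simp add: divide_simps)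
        then show ?thesis by simp
      qed
      also have "\<dots> = e0 * (Le / (2 * (Le + 1)))" by simp
      also have "\<dots> < e0"
      proof -
        have "Le / (2 * (Le + 1)) < 1" using le(2) by (simp add: field_simps)
        then show ?thesis using e0p mult_strict_left_mono[of "Le / (2 * (Le + 1))" 1 e0] by simp
      qed
      finally have "eval I (sbs \<omega> X (u t)) e > 0" unfolding e0_def by linarith
      then show ?thesis using evcoinc[OF dfe] by simp
    qed
    have sol: "sol I (zip xs fs) \<omega> T' \<phi>"
      unfolding sol_zip[OF len]
    proof (intro conjI allI impI ballI)
      show "0 \<le> T'" using T'p by simp
    next
      fix v :: "'v var" assume "v \<notin> Diff ` set xs"
      then show "\<phi> 0 v = \<omega> v" using U0 by (cases v) (auto simp: \<phi>_def X_def)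
    next
      fix \<zeta> i assume z: "\<zeta> \<in> {0..T'}" and i: "i < length xs"
      have "\<phi> \<zeta> (Diff (xs!i)) = G (xs!i) (sbs \<omega> X (u \<zeta>))" using i by (simp add: \<phi>_def X_def)
      also have "\<dots> = eval I (\<phi> \<zeta>) (fs!i)" using Gi i evcoinc df fsi by (simp add: n_def)
      finally show "\<phi> \<zeta> (Diff (xs!i)) = eval I (\<phi> \<zeta>) (fs!i)" .
    next
      fix \<zeta> v assume "v \<notin> Base ` set xs" "v \<notin> Diff ` set xs"
      then show "\<phi> \<zeta> v = \<phi> 0 v" by (cases v) (auto simp: \<phi>_def X_def)
    next
      fix \<zeta> i assume z: "\<zeta> \<in> {0..T'}" and i: "i < length xs"
      have zT: "\<zeta> \<in> {0..T}" using z T'T by auto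
      have xi: "xs!i \<in> X" using i by (simp add: X_def)
      have "((\<lambda>t. u t (xs!i)) has_real_derivative G (xs!i) (sbs \<omega> X (u \<zeta>))) (at \<zeta> within {0..T'})"
        by (rule DERIV_subset[OF _ ]) (use Ud zT xi T'T in auto)
      moreover have "(\<lambda>t. \<phi> t (Base (xs!i))) = (\<lambda>t. u t (xs!i))" using xi by (simp add: \<phi>_def)
      moreover have "\<phi> \<zeta> (Diff (xs!i)) = G (xs!i) (sbs \<omega> X (u \<zeta>))" using xi by (simp add: \<phi>_def)
      ultimately show "((\<lambda>t. \<phi> t (Base (xs!i))) has_real_derivative \<phi> \<zeta> (Diff (xs!i))) (at \<zeta> within {0..T'})"
        by simp
    qed
    have fin: "\<not> sem I (VecEq xs ys) (\<phi> T')"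
    proof
      assume "sem I (VecEq xs ys) (\<phi> T')"
      then have "\<phi> T' (Base a0) = \<phi> T' (Base (ys!i0))" using VE1 i0 by (simp add: a0_def)
      moreover have "\<phi> T' (Base a0) = u T' a0" using a0X by (simp add: \<phi>_def)
      moreover have "ys!i0 \<notin> X"
      proof -
        have "ys!i0 \<in> set ys" using i0 leny by (simp add: n_def)
        then show ?thesis using disj by (auto simp: X_def)
      qed
      then have "\<phi> T' (Base (ys!i0)) = \<omega> (Base (ys!i0))" by (simp add: \<phi>_def)
      moreover have "\<omega> (Base (ys!i0)) = \<omega> (Base a0)" using ve VE1 i0 by (simp add: a0_def)
      moreover have "u T' a0 \<noteq> u 0 a0" using d1(2) T'p T'T by (auto simp: T'_def)
      ultimately show False using U0 by simp
    qed
    show "sem I (Dia (zip xs fs) (Gt e (Const 0)) (Not (VecEq xs ys))) \<omega>"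
      using sol fin epos by (auto simp: ode_rel_sol intro!: exI[of _ T'] exI[of _ \<phi>])
  qed
qed


theorem lemma5p1:
  fixes I :: "'f::finite \<Rightarrow> real list \<Rightarrow> real" and ar :: "'f \<Rightarrow> nat"
  assumes smooth: "\<forall>g. smooth_len (ar g) (I g)"
  shows
  \<comment> \<open>(Uniq)\<close>
  "(\<forall>(xs :: 'v list) fs Q1 Q2 P.
      length fs = length xs \<and> wf_ode ar (zip xs fs) \<and>
      semianalytic Q1 \<and> wf_fml ar Q1 \<and> semianalytic Q2 \<and> wf_fml ar Q2 \<and> wf_fml ar P \<longrightarrow>
      valid I (Iff (And (Dia (zip xs fs) Q1 P) (Dia (zip xs fs) Q2 P))
                   (Dia (zip xs fs) (And Q1 Q2) P)))
   \<and>
  \<comment> \<open>(Cont)\<close>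
   (\<forall>(xs :: 'v list) fs ys e.
      length fs = length xs \<and> wf_ode ar (zip xs fs) \<and>
      length ys = length xs \<and> distinct ys \<and> set ys \<inter> set xs = {} \<and>
      (\<forall>y\<in>set ys. y \<notin> (\<Union>f\<in>set fs. vars_trm f) \<and> y \<notin> vars_trm e) \<and>
      dfree e \<and> wf_trm ar e \<and>
      (\<forall>\<omega>. \<exists>f\<in>set fs. eval I \<omega> f \<noteq> 0) \<longrightarrow>
      valid I (Imp (VecEq xs ys)
                   (Iff (Dia (zip xs fs) (Gt e (Const 0)) (Not (VecEq xs ys)))
                        (Gt e (Const 0)))))
   \<and>
  \<comment> \<open>(Dadj)\<close>
   (\<forall>(xs :: 'v list) fs ys Q.
      length fs = length xs \<and> wf_ode ar (zip xs fs) \<and>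
      length ys = length xs \<and> distinct ys \<and> set ys \<inter> set xs = {} \<and>
      (\<forall>y\<in>set ys. y \<notin> (\<Union>f\<in>set fs. vars_trm f) \<and> y \<notin> vars_fml Q) \<and>
      semianalytic Q \<and> wf_fml ar Q \<longrightarrow>
      valid I (Iff (Dia (zip xs fs) Q (VecEq xs ys))
                   (Dia (zip ys (map (\<lambda>f. Neg (rename_trm (ren xs ys) f)) fs))
                        (rename_fml (ren xs ys) Q) (VecEq ys xs))))"
  by (intro conjI uniq_part[OF smooth] cont_part[OF smooth] dadj_part)

end
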